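(* Consider the exponential case $\ell(y)=y$ (i.e. $k=1$), with $0<c<p$, horizon $T\ge1$, $b_1>0$, $a_1>1$, and set of feasible wholesale prices $W=(0,\infty)$. Then: (a) There exists a unique SMPS $(w^*_t(a),\tilde z^*_t(a,w))_{1\le t\le T}$. Moreover, writing $\tilde z^*_t(a):=\tilde z^*_t(a,w^*_t(a))$, for all $t\le T$ and $a\in A$, $w\in W$: $$w^*_t(a)=\big(p+f^R_{t+1}(a+1)-f^R_{t+1}(a)\big)\left[1-\frac1a+\frac{c}{a\,w^*_t(a)}-\frac{f^M_{t+1}(a+1)-f^M_{t+1}(a)}{a\big(p+f^R_{t+1}(a+1)-f^R_{t+1}(a)\big)}\right]^{a},$$ $$\tilde z^*_t(a,w)=\max\left(\left(\frac{p+f^R_{t+1}(a+1)-f^R_{t+1}(a)}{w}\right)^{1/a}-1,\ 0\right),\qquad \tilde z^*_t(a)=\left(\frac{p+f^R_{t+1}(a+1)-f^R_{t+1}(a)}{w^*_t(a)}\right)^{1/a}-1,$$ and the standardized value functions are $$f^R_t(a)=\sum_{i=0}^{T-t}\Big[p-w^*_{t+i}(a+i)\big(1+(a+i)\tilde z^*_{t+i}(a+i)\big)\Big],\qquad f^M_t(a)=\sum_{i=0}^{T-t}\Big[w^*_{t+i}(a+i)-c\big(1+(a+i)\tilde z^*_{t+i}(a+i)\big)\Big],$$ with $f^R_{T+1}=f^M_{T+1}=0$. (b) There exists a unique MPE $(w^*_t(a,b),q^*_t(a,b,w))_{1\le t\le T}$ of the game, given by $w^*_t(a,b)=w^*_t(a)$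 and $q^*_t(a,b,w)=b\,\tilde z^*_t(a,w)$.
   Context: Setting. A manufacturer M and a retailer R interact over periods $t=1,\dots,T$. Retail price $p$ and unit cost $c$ satisfy $0<c<p$. Wholesale prices lie in $W=(0,\infty)$; order quantities in $Q=[0,\infty)$. An unknown $\Theta>0$ has Gamma prior density $\phi(\theta\mid a,b)=b^{a}\theta^{a-1}e^{-b\theta}/\Gamma(a)$; given $\Theta=\theta$ demands are i.i.d. with $P(D_t\le y\mid\theta)=1-e^{-\theta y}$. The predictive distribution function is $G(y\mid a,b)=1-\big(b/(b+y)\big)^{a}$, $y\ge0$, $\bar G=1-G$, and $E[\,\cdot\mid a,b]$ is expectation under $D\sim G(\cdot\mid a,b)$. Let $A=\{a_1+n:n=0,1,2,\dots\}$, $B=[b_1,\infty)$. Each period the manufacturer chooses $w$, the retailer observes it and orders $q$, sales $\min(D,q)$ are publicly observed (unmet demand lost, unobserved), and the public belief state moves to $\Phi(a,b,q,d)=(a+\mathbf 1\{\min(d,q)<q\},\ b+\min(d,q))$. Per-period payoffs: $\Pi^R(w,q\mid a,b)=p\,E[\min(D,q)\mid a,b]-wq$, $\Pi^M(w,q)=(w-c)q$. MPE: Markov strategies are Borel maps $w_t:A\times B\to W$, $q_t:A\times B\times W\to Q$. A pair $(w^*_t,q^*_t)_{t\le T}$ is an MPE if there exist $V^R_t,V^M_t:A\times B\to\mathbb R$, $\hat V^R_t:A\times B\times W\to\mathbb R$ ($t\le T+1$) with, for all $a,b,w$: (i) all equal $0$ at $t=T+1$; (ii) $\hat V^R_t(a,b,w)=\max_{q\in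 Q}\{\Pi^R(w,q\mid a,b)+E[V^R_{t+1}(\Phi(a,b,q,D))\mid a,b]\}$, attained at $q^*_t(a,b,w)$; (iii) $V^M_t(a,b)=\max_{w\in W}\{\Pi^M(w,q^*_t(a,b,w))+E[V^M_{t+1}(\Phi(a,b,q^*_t(a,b,w),D))\mid a,b]\}$, attained at $w^*_t(a,b)$; (iv) $V^R_t(a,b)=\hat V^R_t(a,b,w^*_t(a,b))$. SMPS: with $\tilde Q=[0,\infty)$, standardized payoffs $\tilde\Pi^R(w,\tilde z\mid a)=(a-1)(p\,E[\min(D,\tilde z)\mid a,1]-w\tilde z)$, $\tilde\Pi^M(w,\tilde z\mid a)=(a-1)(w-c)\tilde z$, and for $f:A\to\mathbb R$ the operator $\mathcal E[f,\tilde z\mid a]=G(\tilde z\mid a-1,1)f(a+1)+\bar G(\tilde z\mid a-1,1)f(a)$. Standardized Markov strategies are maps $w_t:A\to W$, $\tilde z_t:A\times W\to\tilde Q$. A pair $(w^*_t,\tilde z^*_t)_{t\le T}$ is an SMPS if there exist $f^R_t,f^M_t:A\to\mathbb R$, $\hat f^R_t:A\times W\to\mathbb R$ ($t\le T+1$) with, for all $a,w$: (i) all equal $0$ at $t=T+1$; (ii) $\hat f^R_t(a,w)=\max_{\tilde z\in\tilde Q}\{\tilde\Pi^R(w,\tilde z\mid a)+\mathcal E[f^R_{t+1},\tilde z\mid a]\}$, attained at $\tilde z^*_t(a,w)$; (iii) $f^M_t(a)=\max_{w\in W}\{\tilde\Pi^M(w,\tilde z^*_t(a,w)\mid a)+\mathcal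 E[f^M_{t+1},\tilde z^*_t(a,w)\mid a]\}$, attained at $w^*_t(a)$; (iv) $f^R_t(a)=\hat f^R_t(a,w^*_t(a))$. *)

theory Defs
  imports "HOL-Analysis.Analysis"
begin

definition Aset :: "real \<Rightarrow> real set" where
  "Aset a1 = {a1 + real n | n. True}"

definition Bset :: "real \<Rightarrow> real set" where
  "Bset b1 = {b1..}"

definition Wset :: "real set" where
  "Wset = {0<..}"

definition Qset :: "real set" where
  "Qset = {0..}"

definition Gpred :: "real \<Rightarrow> real \<Rightarrow> real \<Rightarrow> real" where
  "Gpred a b y = 1 - (b / (b + y)) powr a"

text \<open>The law of D under G(. | a,b): the Borel measure on the reals whose
  distribution function is G(. | a,b) on [0,inf) and 0 on (-inf,0].\<close>
definition pred :: "real \<Rightarrow> real \<Rightarrow> real measure" where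
  "pred a b = interval_measure (\<lambda>y. if y \<le> 0 then 0 else Gpred a b y)"

definition Epred :: "real \<Rightarrow> real \<Rightarrow> (real \<Rightarrow> real) \<Rightarrow> real" where
  "Epred a b h = (\<integral>y. h y \<partial>pred a b)"

definition Phi :: "real \<Rightarrow> real \<Rightarrow> real \<Rightarrow> real \<Rightarrow> real \<times> real" where
  "Phi a b q d = (a + (if min d q < q then 1 else 0), b + min d q)"

definition PiR :: "real \<Rightarrow> real \<Rightarrow> real \<Rightarrow> real \<Rightarrow> real \<Rightarrow> real" where
  "PiR p w q a b = p * Epred a b (\<lambda>y. min y q) - w * q"

definition PiM :: "real \<Rightarrow> real \<Rightarrow> real \<Rightarrow> real" where
  "PiM c w q = (w - c) * q"

definition sPiR :: "real \<Rightarrow> real \<Rightarrow> real \<Rightarrow> real \<Rightarrow> real" where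
  "sPiR p w z a = (a - 1) * (p * Epred a 1 (\<lambda>y. min y z) - w * z)"

definition sPiM :: "real \<Rightarrow> real \<Rightarrow> real \<Rightarrow> real \<Rightarrow> real" where
  "sPiM c w z a = (a - 1) * (w - c) * z"

definition calE :: "(real \<Rightarrow> real) \<Rightarrow> real \<Rightarrow> real \<Rightarrow> real" where
  "calE f z a = Gpred (a - 1) 1 z * f (a + 1) + (1 - Gpred (a - 1) 1 z) * f a"

text \<open>w : period -> a -> wholesale price; z : period -> a -> w -> standardized order;
  fR, fM, fRh : the value functions of conditions (i)-(iv). Periods are 1..T.\<close>
definition smps_values ::
  "real \<Rightarrow> real \<Rightarrow> nat \<Rightarrow> real \<Rightarrow>
   (nat \<Rightarrow> real \<Rightarrow> real) \<Rightarrow> (nat \<Rightarrow> real \<Rightarrow> real \<Rightarrow> real) \<Rightarrow>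
   (nat \<Rightarrow> real \<Rightarrow> real) \<Rightarrow> (nat \<Rightarrow> real \<Rightarrow> real) \<Rightarrow> (nat \<Rightarrow> real \<Rightarrow> real \<Rightarrow> real) \<Rightarrow> bool"
where
  "smps_values p c T a1 w z fR fM fRh \<longleftrightarrow>
     (\<forall>a\<in>Aset a1. fR (Suc T) a = 0 \<and> fM (Suc T) a = 0 \<and> (\<forall>v\<in>Wset. fRh (Suc T) a v = 0)) \<and>
     (\<forall>t\<in>{1..T}. \<forall>a\<in>Aset a1. \<forall>v\<in>Wset.
        z t a v \<in> Qset \<and>
        (\<forall>z'\<in>Qset. sPiR p v z' a + calE (fR (Suc t)) z' a
                    \<le> sPiR p v (z t a v) a + calE (fR (Suc t)) (z t a v) a) \<and>
        fRh t a v = sPiR p v (z t a v) a + calE (fR (Suc t)) (z t a v) a) \<and>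
     (\<forall>t\<in>{1..T}. \<forall>a\<in>Aset a1.
        w t a \<in> Wset \<and>
        (\<forall>v\<in>Wset. sPiM c v (z t a v) a + calE (fM (Suc t)) (z t a v) a
                   \<le> sPiM c (w t a) (z t a (w t a)) a + calE (fM (Suc t)) (z t a (w t a)) a) \<and>
        fM t a = sPiM c (w t a) (z t a (w t a)) a + calE (fM (Suc t)) (z t a (w t a)) a) \<and>
     (\<forall>t\<in>{1..T}. \<forall>a\<in>Aset a1. fR t a = fRh t a (w t a))"

definition is_smps ::
  "real \<Rightarrow> real \<Rightarrow> nat \<Rightarrow> real \<Rightarrow>
   (nat \<Rightarrow> real \<Rightarrow> real) \<Rightarrow> (nat \<Rightarrow> real \<Rightarrow> real \<Rightarrow> real) \<Rightarrow> bool"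
where
  "is_smps p c T a1 w z \<longleftrightarrow> (\<exists>fR fM fRh. smps_values p c T a1 w z fR fM fRh)"

definition borel_markov ::
  "real \<Rightarrow> real \<Rightarrow> nat \<Rightarrow> (nat \<Rightarrow> real \<Rightarrow> real \<Rightarrow> real) \<Rightarrow>
   (nat \<Rightarrow> real \<Rightarrow> real \<Rightarrow> real \<Rightarrow> real) \<Rightarrow> bool"
where
  "borel_markov a1 b1 T w q \<longleftrightarrow>
     (\<forall>t\<in>{1..T}.
        (\<forall>a\<in>Aset a1. \<forall>b\<in>Bset b1. w t a b \<in> Wset \<and> (\<forall>v\<in>Wset. q t a b v \<in> Qset)) \<and>
        (\<lambda>x. w t (fst x) (snd x)) \<in> borel_measurable (restrict_space borel (Aset a1 \<times> Bset b1)) \<and>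
        (\<lambda>x. q t (fst x) (fst (snd x)) (snd (snd x)))
           \<in> borel_measurable (restrict_space borel (Aset a1 \<times> Bset b1 \<times> Wset)))"

text \<open>Conditions (i)-(iv); the expectations occurring in them are required to
  exist (integrability of the integrands).\<close>
definition mpe_values ::
  "real \<Rightarrow> real \<Rightarrow> nat \<Rightarrow> real \<Rightarrow> real \<Rightarrow>
   (nat \<Rightarrow> real \<Rightarrow> real \<Rightarrow> real) \<Rightarrow> (nat \<Rightarrow> real \<Rightarrow> real \<Rightarrow> real \<Rightarrow> real) \<Rightarrow>
   (nat \<Rightarrow> real \<Rightarrow> real \<Rightarrow> real) \<Rightarrow> (nat \<Rightarrow> real \<Rightarrow> real \<Rightarrow> real) \<Rightarrow>
   (nat \<Rightarrow> real \<Rightarrow> real \<Rightarrow> real \<Rightarrow> real) \<Rightarrow> bool"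
where
  "mpe_values p c T a1 b1 w q VR VM VRh \<longleftrightarrow>
     (\<forall>a\<in>Aset a1. \<forall>b\<in>Bset b1.
        VR (Suc T) a b = 0 \<and> VM (Suc T) a b = 0 \<and> (\<forall>v\<in>Wset. VRh (Suc T) a b v = 0)) \<and>
     (\<forall>t\<in>{1..T}. \<forall>a\<in>Aset a1. \<forall>b\<in>Bset b1. \<forall>v\<in>Wset.
        (\<forall>q'\<in>Qset. integrable (pred a b) (\<lambda>d. case_prod (VR (Suc t)) (Phi a b q' d))) \<and>
        (\<forall>q'\<in>Qset. PiR p v q' a b + Epred a b (\<lambda>d. case_prod (VR (Suc t)) (Phi a b q' d))
            \<le> PiR p v (q t a b v) a b
               + Epred a b (\<lambda>d. case_prod (VR (Suc t)) (Phi a b (q t a b v) d))) \<and>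
        VRh t a b v = PiR p v (q t a b v) a b
               + Epred a b (\<lambda>d. case_prod (VR (Suc t)) (Phi a b (q t a b v) d))) \<and>
     (\<forall>t\<in>{1..T}. \<forall>a\<in>Aset a1. \<forall>b\<in>Bset b1.
        (\<forall>v\<in>Wset. integrable (pred a b) (\<lambda>d. case_prod (VM (Suc t)) (Phi a b (q t a b v) d))) \<and>
        (\<forall>v\<in>Wset. PiM c v (q t a b v)
                     + Epred a b (\<lambda>d. case_prod (VM (Suc t)) (Phi a b (q t a b v) d))
            \<le> PiM c (w t a b) (q t a b (w t a b))
               + Epred a b (\<lambda>d. case_prod (VM (Suc t)) (Phi a b (q t a b (w t a b)) d))) \<and>
        VM t a b = PiM c (w t a b) (q t a b (w t a b))
               + Epred a b (\<lambda>d. case_prod (VM (Suc t)) (Phi a b (q t a b (w t a b)) d))) \<and>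
     (\<forall>t\<in>{1..T}. \<forall>a\<in>Aset a1. \<forall>b\<in>Bset b1. VR t a b = VRh t a b (w t a b))"

definition is_mpe ::
  "real \<Rightarrow> real \<Rightarrow> nat \<Rightarrow> real \<Rightarrow> real \<Rightarrow>
   (nat \<Rightarrow> real \<Rightarrow> real \<Rightarrow> real) \<Rightarrow> (nat \<Rightarrow> real \<Rightarrow> real \<Rightarrow> real \<Rightarrow> real) \<Rightarrow> bool"
where
  "is_mpe p c T a1 b1 w q \<longleftrightarrow>
     borel_markov a1 b1 T w q \<and> (\<exists>VR VM VRh. mpe_values p c T a1 b1 w q VR VM VRh)"

end

theory Submission
  imports Defs "HOL-Probability.Distribution_Functions" "HOL-Real_Asymp.Real_Asymp"
begin

definition Fcdf :: "real \<Rightarrow> real \<Rightarrow> real \<Rightarrow> real" where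
  "Fcdf a b y = (if y \<le> 0 then 0 else Gpred a b y)"

lemma pred_eq: "pred a b = interval_measure (Fcdf a b)"
  by (simp add: pred_def Fcdf_def[abs_def])

lemma Fcdf_alt: "0 < b \<Longrightarrow> Fcdf a b y = 1 - (b / (b + max y 0)) powr a"
  by (auto simp: Fcdf_def Gpred_def max_def)

lemma Fcdf_cont: assumes "0 < b" shows "continuous_on UNIV (Fcdf a b)"
proof -
  have "continuous_on UNIV (\<lambda>y. 1 - (b / (b + max y 0)) powr a)"
    using assms by (intro continuous_intros) (auto simp: add_pos_nonneg)
  then show ?thesis using Fcdf_alt[OF assms] by simp
qed

lemma Fcdf_mono: assumes "0 < b" "0 \<le> a" "x \<le> y" shows "Fcdf a b x \<le> Fcdf a b y"
proof -
  have "(b / (b + max y 0)) powr a \<le> (b / (b + max x 0)) powr a"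
    using assms by (intro powr_mono2) (auto intro!: divide_left_mono simp: add_pos_nonneg)
  then show ?thesis using Fcdf_alt[OF assms(1)] by simp
qed

lemma Fcdf_bot: "(Fcdf a b \<longlongrightarrow> 0) at_bot"
proof -
  have "eventually (\<lambda>y. Fcdf a b y = 0) at_bot"
    by (auto simp: eventually_at_bot_linorder Fcdf_def intro!: exI[of _ 0])
  then show ?thesis by (rule tendsto_eventually)
qed

lemma Fcdf_top: assumes "0 < b" "0 < a" shows "(Fcdf a b \<longlongrightarrow> 1) at_top"
proof -
  have "((\<lambda>y. 1 - (b / (b + y)) powr a) \<longlongrightarrow> 1) at_top"
    using assms by real_asymp
  moreover have "eventually (\<lambda>y. 1 - (b / (b + y)) powr a = Fcdf a b y) at_top"
    using assms by (auto simp: eventually_at_top_linorder Fcdf_def Gpred_def intro!: exI[of _ 1])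
  ultimately show ?thesis by (rule Lim_transform_eventually)
qed

lemma Fcdf_rc: "0 < b \<Longrightarrow> continuous (at_right x) (Fcdf a b)"
  using Fcdf_cont[of b a] by (simp add: continuous_on_eq_continuous_at continuous_at_imp_continuous_within)

lemma pred_real_distribution: assumes "0 < b" "0 < a" shows "real_distribution (pred a b)"
  unfolding pred_eq
  by (rule real_distribution_interval_measure)
     (use assms Fcdf_mono Fcdf_rc Fcdf_bot Fcdf_top in auto)

lemma pred_cdf: assumes "0 < b" "0 < a" shows "measure (pred a b) {..x} = Fcdf a b x"
  unfolding pred_eq
  by (rule measure_interval_measure_Iic)
     (use assms Fcdf_mono Fcdf_rc Fcdf_bot in auto)

definition fd :: "real \<Rightarrow> real \<Rightarrow> real \<Rightarrow> real" where
  "fd a b y = (if 0 \<le> y then a * b powr a * (b + y) powr (-a-1) else 0)"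

lemma fd_nonneg: "0 < a \<Longrightarrow> 0 < b \<Longrightarrow> 0 \<le> fd a b y"
  by (auto simp: fd_def)

lemma fd_meas[measurable]: "fd a b \<in> borel_measurable borel"
  unfolding fd_def[abs_def] by measurable

lemma Fs_deriv:
  assumes "0 < b" "-b < y"
  shows "((\<lambda>y. - (b powr a * (b + y) powr (-a))) has_real_derivative (a * b powr a * (b + y) powr (-a-1))) (at y)"
proof -
  have "b + y > 0" using assms by simp
  then show ?thesis
    by (auto intro!: derivative_eq_intros simp: algebra_simps)
qed

lemma Fs_val: fixes a b y :: real assumes "0 < b" "0 \<le> y"
  shows "- (b powr a * (b + y) powr (-a)) = - ((b / (b + y)) powr a)"
proof -
  have "(b / (b + y)) powr a = b powr a / (b + y) powr a" by (rule powr_divide)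
  then show ?thesis by (simp add: powr_minus divide_inverse)
qed

lemma dens_Iic:
  assumes "0 < a" "0 < b"
  shows "emeasure (density lborel (\<lambda>y. ennreal (fd a b y))) {..x} = ennreal (Fcdf a b x)"
proof (cases "0 \<le> x")
  case False
  have "emeasure (density lborel (\<lambda>y. ennreal (fd a b y))) {..x} = (\<integral>\<^sup>+ y. ennreal (fd a b y) * indicator {..x} y \<partial>lborel)"
    by (simp add: emeasure_density)
  also have "\<dots> = (\<integral>\<^sup>+ y. 0 \<partial>(lborel::real measure))"
    using False by (intro nn_integral_cong) (auto simp: fd_def split: split_indicator)
  finally show ?thesis using False by (simp add: Fcdf_def)
next
  case True
  have "emeasure (density lborel (\<lambda>y. ennreal (fd a b y))) {..x} = (\<integral>\<^sup>+ y. ennreal (fd a b y) * indicator {..x} y \<partial>lborel)"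
    by (simp add: emeasure_density)
  also have "\<dots> = (\<integral>\<^sup>+ y. ennreal (a * b powr a * (b + y) powr (-a-1)) * indicator {0..x} y \<partial>lborel)"
    by (intro nn_integral_cong) (auto simp: fd_def split: split_indicator)
  also have "\<dots> = ennreal ((- (b powr a * (b + x) powr (-a))) - (- (b powr a * (b + 0) powr (-a))))"
    using assms True
    by (intro nn_integral_FTC_Icc) (auto intro!: Fs_deriv)
  also have "(- (b powr a * (b + x) powr (-a))) - (- (b powr a * (b + 0) powr (-a))) = Fcdf a b x"
    using assms True Fs_val[of b x a] by (auto simp: Fcdf_def Gpred_def powr_minus)
  finally show ?thesis .
qed

lemma dens_UNIV:
  assumes "0 < a" "0 < b"
  shows "emeasure (density lborel (\<lambda>y. ennreal (fd a b y))) UNIV = 1"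
proof -
  have "emeasure (density lborel (\<lambda>y. ennreal (fd a b y))) UNIV = (\<integral>\<^sup>+ y. ennreal (fd a b y) * indicator UNIV y \<partial>lborel)"
    by (simp add: emeasure_density)
  also have "\<dots> = (\<integral>\<^sup>+ y. ennreal (a * b powr a * (b + y) powr (-a-1)) * indicator {0..} y \<partial>lborel)"
    by (intro nn_integral_cong) (auto simp: fd_def split: split_indicator)
  also have "\<dots> = ennreal (0 - (- (b powr a * (b + 0) powr (-a))))"
  proof (rule nn_integral_FTC_atLeast)
    show "(\<lambda>y. a * b powr a * (b + y) powr (-a-1)) \<in> borel_measurable borel" by measurable
    show "((\<lambda>y. - (b powr a * (b + y) powr (-a))) \<longlongrightarrow> 0) at_top"
      using assms by real_asymp
  qed (use assms in \<open>auto intro!: Fs_deriv\<close>)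
  also have "0 - (- (b powr a * (b + 0) powr (-a))) = 1"
    using assms by (simp add: powr_minus)
  finally show ?thesis by simp
qed

lemma pred_density:
  assumes "0 < a" "0 < b"
  shows "pred a b = density lborel (\<lambda>y. ennreal (fd a b y))"
proof (rule cdf_unique')
  interpret R: real_distribution "pred a b" using pred_real_distribution[OF assms(2,1)] .
  show "finite_borel_measure (pred a b)" by (rule R.finite_borel_measure_M)
  let ?N = "density lborel (\<lambda>y. ennreal (fd a b y))"
  show "finite_borel_measure ?N"
  proof (intro finite_borel_measure.intro finite_measureI finite_borel_measure_axioms.intro)
    show "emeasure ?N (space ?N) \<noteq> \<infinity>" using dens_UNIV[OF assms] by simp
  qed simp
  show "cdf (pred a b) = cdf ?N"
  proof
    fix x
    have "cdf ?N x = enn2real (emeasure ?N {..x})" by (simp add: cdf_def measure_def)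
    also have "\<dots> = Fcdf a b x"
    proof -
      have "0 \<le> Fcdf a b x"
      proof (cases "0 \<le> x")
        case True then show ?thesis using Fcdf_mono[of b a 0 x] assms by (simp add: Fcdf_def)
      qed (simp add: Fcdf_def)
      then show ?thesis using dens_Iic[OF assms] by simp
    qed
    finally show "cdf (pred a b) x = cdf ?N x"
      using pred_cdf[OF assms(2,1)] by (simp add: cdf_def)
  qed
qed

lemma pred_prob: assumes "0 < a" "0 < b" shows "prob_space (pred a b)"
  using pred_real_distribution[OF assms(2,1)] by (simp add: real_distribution_def)

lemma sets_pred[simp, measurable_cong]: "sets (pred a b) = sets borel"
  by (simp add: pred_def)

lemma space_pred[simp]: "space (pred a b) = UNIV"
  by (simp add: pred_def)

lemma AE_pred_nonneg: assumes "0 < a" "0 < b" shows "AE y in pred a b. 0 \<le> y"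
  unfolding pred_density[OF assms]
  by (subst AE_density) (auto simp: fd_def)

lemma AE_pred_ne: assumes "0 < a" "0 < b" shows "AE y in pred a b. y \<noteq> q"
  unfolding pred_density[OF assms]
  by (subst AE_density) (auto intro: AE_mp[OF AE_lborel_singleton[of q]])

lemma prob_gt:
  assumes "0 < a" "0 < b" "0 \<le> q"
  shows "measure (pred a b) {q<..} = (b / (b + q)) powr a"
proof -
  interpret prob_space "pred a b" by (rule pred_prob[OF assms(1,2)])
  have "{q<..} = space (pred a b) - {..q}" by auto
  then have "measure (pred a b) {q<..} = 1 - measure (pred a b) {..q}"
    using finite_measure_compl[of "{..q}"] prob_space by simp
  also have "\<dots> = (b / (b + q)) powr a"
    using pred_cdf[OF assms(2,1)] assms by (auto simp: Fcdf_def Gpred_def)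
  finally show ?thesis .
qed

lemma prob_ge:
  assumes "0 < a" "0 < b" "0 \<le> q"
  shows "measure (pred a b) {q..} = (b / (b + q)) powr a"
proof -
  have "measure (pred a b) {q..} = measure (pred a b) {q<..}"
    by (rule measure_eq_AE) (use AE_pred_ne[OF assms(1,2), of q] in \<open>auto elim!: AE_mp\<close>)
  then show ?thesis using prob_gt[OF assms] by simp
qed

lemma dpow: fixes b y r :: real assumes "0 < b + y"
  shows "((\<lambda>y. (b + y) powr r) has_real_derivative r * (b + y) powr (r - 1)) (at y)"
proof -
  have "((\<lambda>y. b + y) has_real_derivative 1) (at y)"
    by (auto intro!: derivative_eq_intros)
  from DERIV_fun_powr[OF this assms, of r] show ?thesis by simp
qed

lemma aux_div: "(a::real) \<noteq> 1 \<Longrightarrow> c / (a - 1) * ((1 - a) * X) = - (c * X)"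
  by (simp add: field_simps)

lemma Hs_deriv:
  fixes a b y :: real
  assumes "0 < b" "-b < y" "a \<noteq> 1"
  shows "((\<lambda>y. - (y * (b powr a * (b + y) powr (-a))) - b powr a / (a - 1) * (b + y) powr (1 - a))
          has_real_derivative (a * b powr a * (b + y) powr (-a-1) * y)) (at y)"
proof -
  have by0: "b + y > 0" using assms by simp
  have d1: "((\<lambda>y. (b + y) powr (-a)) has_real_derivative (-a) * (b + y) powr (-a-1)) (at y)"
    using dpow[OF by0, of "-a"] by simp
  have d2: "((\<lambda>y. (b + y) powr (1-a)) has_real_derivative (1-a) * (b + y) powr (-a)) (at y)"
    using dpow[OF by0, of "1-a"] by simp
  have d3: "((\<lambda>y. y * (b powr a * (b + y) powr (-a))) has_real_derivative
      (y * (b powr a * ((-a) * (b + y) powr (-a-1))) + 1 * (b powr a * (b + y) powr (-a)))) (at y)"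
    by (rule DERIV_mult'[OF DERIV_ident DERIV_cmult[OF d1]])
  have d4: "((\<lambda>y. b powr a / (a - 1) * (b + y) powr (1 - a)) has_real_derivative
      b powr a / (a - 1) * ((1-a) * (b + y) powr (-a))) (at y)"
    by (intro DERIV_cmult d2)
  have "((\<lambda>y. - (y * (b powr a * (b + y) powr (-a))) - b powr a / (a - 1) * (b + y) powr (1 - a))
          has_real_derivative (- (y * (b powr a * ((-a) * (b + y) powr (-a-1))) + 1 * (b powr a * (b + y) powr (-a)))
             - b powr a / (a - 1) * ((1-a) * (b + y) powr (-a)))) (at y)"
    by (intro DERIV_diff DERIV_minus d3 d4)
  moreover have "(- (y * (b powr a * ((-a) * (b + y) powr (-a-1))) + 1 * (b powr a * (b + y) powr (-a)))
             - b powr a / (a - 1) * ((1-a) * (b + y) powr (-a))) = a * b powr a * (b + y) powr (-a-1) * y"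
    unfolding aux_div[OF assms(3)] by (simp add: algebra_simps)
  ultimately show ?thesis by (rule DERIV_cong)
qed


lemma pw: fixes b y r :: real assumes "0 < b" "0 \<le> y"
  shows "b powr r * (b + y) powr (-r) = (b / (b + y)) powr r"
proof -
  have "(b / (b + y)) powr r = b powr r / (b + y) powr r" by (rule powr_divide)
  then show ?thesis by (simp add: powr_minus divide_inverse)
qed

lemma E_min:
  assumes "1 < a" "0 < b" "0 \<le> q"
  shows "integrable (pred a b) (\<lambda>y. min y q)"
    and "Epred a b (\<lambda>y. min y q) = b / (a - 1) * (1 - (b / (b + q)) powr (a - 1))"
proof -
  have a0: "0 < a" using assms by simp
  interpret prob_space "pred a b" by (rule pred_prob[OF a0 assms(2)])
  have AEn: "AE y in pred a b. 0 \<le> y" by (rule AE_pred_nonneg[OF a0 assms(2)])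
  have int1: "integrable (pred a b) (\<lambda>y. y * indicator {..q} y)"
    by (rule integrable_const_bound[where B=q]) (use AEn assms in \<open>auto elim!: AE_mp split: split_indicator\<close>)
  have int2: "integrable (pred a b) (\<lambda>y. q * indicator {q<..} y)"
    by (rule integrable_const_bound[where B=q]) (use assms in \<open>auto split: split_indicator\<close>)
  have pt: "(\<lambda>y. min y q) = (\<lambda>y. y * indicator {..q} y + q * indicator {q<..} y)"
    by (auto simp: fun_eq_iff split: split_indicator)
  show "integrable (pred a b) (\<lambda>y. min y q)"
    unfolding pt using int1 int2 by simp
  have "Epred a b (\<lambda>y. min y q) = (\<integral>y. y * indicator {..q} y \<partial>pred a b) + (\<integral>y. q * indicator {q<..} y \<partial>pred a b)"
    unfolding Epred_def pt using int1 int2 by simp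
  also have "(\<integral>y. q * indicator {q<..} y \<partial>pred a b) = q * (b / (b + q)) powr a"
    using prob_gt[OF a0 assms(2,3)] by simp
  also have "(\<integral>y. y * indicator {..q} y \<partial>pred a b)
      = (\<integral>y. fd a b y *\<^sub>R (y * indicator {..q} y) \<partial>lborel)"
    unfolding pred_density[OF a0 assms(2)]
    by (rule integral_density) (auto intro!: fd_nonneg a0 assms)
  also have "\<dots> = (\<integral>y. (a * b powr a * (b + y) powr (-a-1) * y) * indicator {0..q} y \<partial>lborel)"
    by (intro Bochner_Integration.integral_cong) (auto simp: fd_def split: split_indicator)
  also have "\<dots> = (- (q * (b powr a * (b + q) powr (-a))) - b powr a / (a - 1) * (b + q) powr (1 - a))
       - (- (0 * (b powr a * (b + 0) powr (-a))) - b powr a / (a - 1) * (b + 0) powr (1 - a))"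
  proof (rule integral_FTC_Icc_real)
    fix x assume x: "0 \<le> x" "x \<le> q"
    show "((\<lambda>y. - (y * (b powr a * (b + y) powr (-a))) - b powr a / (a - 1) * (b + y) powr (1 - a))
          has_real_derivative (a * b powr a * (b + x) powr (-a-1) * x)) (at x)"
      by (rule Hs_deriv) (use assms x in auto)
    have "b + x > 0" using assms x by simp
    then show "isCont (\<lambda>y. a * b powr a * (b + y) powr (-a-1) * y) x"
      by (intro continuous_intros) auto
  qed (use assms in auto)
  also have "\<dots> = - (q * (b / (b + q)) powr a) - b / (a - 1) * (b / (b + q)) powr (a - 1) + b / (a - 1)"
  proof -
    have e1: "b powr a * (b + q) powr (-a) = (b / (b + q)) powr a" by (rule pw) (use assms in auto)
    have ba: "b powr a = b * b powr (a - 1)"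
      using assms by (simp add: powr_mult_base)
    have e2: "b powr a * (b + q) powr (1 - a) = b * (b / (b + q)) powr (a - 1)"
      using pw[of b q "a - 1"] assms by (simp add: ba)
    have e3: "b powr a * (b + 0) powr (1 - a) = b"
      using assms by (simp add: ba powr_minus[symmetric] powr_add[symmetric])
    show ?thesis
      by (simp add: e1 mult.assoc[symmetric] e2[unfolded mult.assoc] e3[simplified] field_simps)
  qed
  finally show "Epred a b (\<lambda>y. min y q) = b / (a - 1) * (1 - (b / (b + q)) powr (a - 1))"
    by (simp add: right_diff_distrib)
qed

lemma inv_pow: fixes a b q :: real assumes "0 < b" "0 \<le> q"
  shows "(1 / (1 + q / b)) powr (a - 1) = (b / (b + q)) powr (a - 1)"
proof -
  have "1 / (1 + q / b) = b / (b + q)" using assms by (simp add: field_simps)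
  then show ?thesis by simp
qed

lemma Gpred_std: fixes a z :: real assumes "0 \<le> z"
  shows "Gpred (a - 1) 1 z = 1 - (1 + z) powr (1 - a)"
proof -
  have "(1 / (1 + z)) powr (a - 1) = 1 / (1 + z) powr (a - 1)"
    using assms by (simp add: powr_divide)
  also have "\<dots> = (1 + z) powr (1 - a)"
    using powr_minus_divide[of "1 + z" "a - 1"] by simp
  finally show ?thesis by (simp add: Gpred_def add.commute)
qed

lemma E_min_std:
  assumes "1 < a" "0 \<le> z"
  shows "Epred a 1 (\<lambda>y. min y z) = (1 - (1 + z) powr (1 - a)) / (a - 1)"
proof -
  have "Epred a 1 (\<lambda>y. min y z) = 1 / (a - 1) * (1 - (1 / (1 + z)) powr (a - 1))"
    using E_min(2)[OF assms(1) _ assms(2), of 1] by simp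
  also have "(1 / (1 + z)) powr (a - 1) = (1 + z) powr (1 - a)"
    using Gpred_std[OF assms(2), of a] by (simp add: Gpred_def add.commute)
  finally show ?thesis by simp
qed

lemma one_plus_pow: fixes a b q :: real assumes "0 < b" "0 \<le> q"
  shows "(1 + q / b) powr (1 - a) = (b / (b + q)) powr (a - 1)"
  using Gpred_std[of "q / b" a] inv_pow[OF assms, of a] assms by (simp add: Gpred_def add.commute)

lemma sPiR_std:
  assumes "1 < a" "0 \<le> z"
  shows "sPiR p v z a = p * (1 - (1 + z) powr (1 - a)) - (a - 1) * v * z"
proof -
  have "(a - 1) * (p * ((1 - U) / (a - 1)) - v * z) = p * (1 - U) - (a - 1) * v * z" for U
    using assms by (simp add: field_simps)
  then show ?thesis by (simp add: sPiR_def E_min_std[OF assms])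
qed

lemma sobjR:
  assumes "1 < a" "0 \<le> z"
  shows "sPiR p v z a + calE f z a = f a + (p + f (a + 1) - f a) * (1 - (1 + z) powr (1 - a)) - (a - 1) * v * z"
  using assms by (simp add: sPiR_std calE_def Gpred_std algebra_simps)

lemma sobjM:
  assumes "1 < a" "0 \<le> z"
  shows "sPiM c v z a + calE f z a = f a + (a - 1) * (v - c) * z + (f (a + 1) - f a) * (1 - (1 + z) powr (1 - a))"
  using assms by (simp add: sPiM_def calE_def Gpred_std algebra_simps)

lemma PiR_scale:
  assumes "1 < a" "0 < b" "0 \<le> q"
  shows "PiR p v q a b = b / (a - 1) * sPiR p v (q / b) a"
proof -
  define Y where "Y = (b / (b + q)) powr (a - 1)"
  have s: "sPiR p v (q / b) a = p * (1 - Y) - (a - 1) * v * (q / b)"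
    using sPiR_std[OF assms(1), of "q / b" p v] one_plus_pow[OF assms(2,3), of a] assms
    by (simp add: Y_def)
  have r: "PiR p v q a b = p * (b / (a - 1) * (1 - Y)) - v * q"
    unfolding PiR_def E_min(2)[OF assms] Y_def ..
  show ?thesis unfolding s r using assms by (simp add: field_simps)
qed

lemma PiM_scale:
  assumes "1 < a" "0 < b"
  shows "PiM c v q = b / (a - 1) * sPiM c v (q / b) a"
  using assms by (simp add: PiM_def sPiM_def field_simps)

lemma Phi_pt:
  assumes "1 < a"
  shows "(case Phi a b q d of (a', b') \<Rightarrow> b' * g a' / (a' - 1))
       = g (a + 1) / a * (b + min d q) + (g a / (a - 1) - g (a + 1) / a) * (b + q) * indicator {q..} d"
  using assms by (auto simp: Phi_def min_def split: split_indicator) (auto simp: field_simps)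

lemma alg1:
  fixes a b Y G0 G1 :: real
  assumes "1 < a"
  shows "G1 / a * (b + b / (a - 1) * (1 - Y)) + (G0 / (a - 1) - G1 / a) * (b * Y)
       = b / (a - 1) * ((1 - Y) * G1 + (1 - (1 - Y)) * G0)"
proof -
  have h: "a \<noteq> 0" "a - 1 \<noteq> 0" using assms by auto
  have "G1 / a * (b + b / (a - 1) * (1 - Y)) = G1 * b * (a - Y) / (a * (a - 1))"
    using h by (simp add: field_simps)
  moreover have "(G0 / (a - 1) - G1 / a) * (b * Y) = (G0 * a - G1 * (a - 1)) * b * Y / (a * (a - 1))"
    using h by (simp add: field_simps)
  moreover have "b / (a - 1) * ((1 - Y) * G1 + (1 - (1 - Y)) * G0) = ((1 - Y) * G1 + Y * G0) * b * a / (a * (a - 1))"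
    using h by (simp add: field_simps)
  ultimately show ?thesis
    by (simp add: add_divide_distrib[symmetric] algebra_simps)
qed

lemma E_V:
  assumes "1 < a" "0 < b" "0 \<le> q"
  shows "integrable (pred a b) (\<lambda>d. case Phi a b q d of (a', b') \<Rightarrow> b' * g a' / (a' - 1))"
    and "Epred a b (\<lambda>d. case Phi a b q d of (a', b') \<Rightarrow> b' * g a' / (a' - 1)) = b / (a - 1) * calE g (q / b) a"
proof -
  have a0: "0 < a" using assms by simp
  interpret prob_space "pred a b" by (rule pred_prob[OF a0 assms(2)])
  have i1: "integrable (pred a b) (\<lambda>d. min d q)" by (rule E_min(1)[OF assms])
  have i2: "integrable (pred a b) (\<lambda>d. indicator {q..} d :: real)"
    by (rule integrable_const_bound[where B=1]) (auto split: split_indicator)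
  have pt: "(\<lambda>d. case Phi a b q d of (a', b') \<Rightarrow> b' * g a' / (a' - 1))
       = (\<lambda>d. g (a + 1) / a * (b + min d q) + (g a / (a - 1) - g (a + 1) / a) * (b + q) * indicator {q..} d)"
    using Phi_pt[OF assms(1)] by (simp add: fun_eq_iff)
  show "integrable (pred a b) (\<lambda>d. case Phi a b q d of (a', b') \<Rightarrow> b' * g a' / (a' - 1))"
    unfolding pt using i1 i2 by simp
  define Y where "Y = (b / (b + q)) powr (a - 1)"
  have Xa: "(b + q) * (b / (b + q)) powr a = b * Y"
  proof -
    have "(b / (b + q)) powr a = (b / (b + q)) powr (1 + (a - 1))" by simp
    also have "\<dots> = (b / (b + q)) * Y" unfolding Y_def powr_add using assms by simp
    finally have "(b / (b + q)) powr a = (b / (b + q)) * Y" .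
    then show ?thesis using assms by simp
  qed
  have "Epred a b (\<lambda>d. case Phi a b q d of (a', b') \<Rightarrow> b' * g a' / (a' - 1))
     = g (a + 1) / a * (b + Epred a b (\<lambda>d. min d q)) + (g a / (a - 1) - g (a + 1) / a) * ((b + q) * measure (pred a b) {q..})"
    unfolding pt Epred_def using i1 i2 prob_space by simp
  also have "\<dots> = g (a + 1) / a * (b + b / (a - 1) * (1 - Y)) + (g a / (a - 1) - g (a + 1) / a) * (b * Y)"
    unfolding E_min(2)[OF assms] prob_ge[OF a0 assms(2,3)] Xa Y_def ..
  also have "\<dots> = b / (a - 1) * ((1 - Y) * g (a + 1) + (1 - (1 - Y)) * g a)"
    by (rule alg1[OF assms(1)])
  also have "Gpred (a - 1) 1 (q / b) = 1 - Y"
    unfolding Gpred_def Y_def using inv_pow[OF assms(2,3), of a] by simp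
  ultimately show "Epred a b (\<lambda>d. case Phi a b q d of (a', b') \<Rightarrow> b' * g a' / (a' - 1)) = b / (a - 1) * calE g (q / b) a"
    unfolding calE_def by simp
qed

definition phi :: "real \<Rightarrow> real \<Rightarrow> real \<Rightarrow> real \<Rightarrow> real" where
  "phi a K L s = s powr a * (L - a * K + a * K * s)"

definition sst :: "real \<Rightarrow> real \<Rightarrow> real \<Rightarrow> real \<Rightarrow> real" where
  "sst c a K L = (THE s. 0 < s \<and> s < 1 \<and> phi a K L s = c)"

definition psi :: "real \<Rightarrow> real \<Rightarrow> real \<Rightarrow> real \<Rightarrow> real \<Rightarrow> real" where
  "psi c a K L x = (a - 1) * (K * x powr a - c) * (1 / x - 1) + (L - K) * (1 - x powr (a - 1))"

definition JR :: "real \<Rightarrow> real \<Rightarrow> real \<Rightarrow> real \<Rightarrow> real" where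
  "JR a K v z = K * (1 - (1 + z) powr (1 - a)) - (a - 1) * v * z"

definition zstar :: "real \<Rightarrow> real \<Rightarrow> real \<Rightarrow> real" where
  "zstar a K v = max ((K / v) powr (1 / a) - 1) 0"

definition JM :: "real \<Rightarrow> real \<Rightarrow> real \<Rightarrow> real \<Rightarrow> real \<Rightarrow> real" where
  "JM c a K L v = (a - 1) * (v - c) * zstar a K v + (L - K) * (1 - (1 + zstar a K v) powr (1 - a))"

context
  fixes c a K L :: real
  assumes c0: "0 < c" and a1: "1 < a" and K0: "0 < K" and Lc: "c < L"
begin

lemma phi_strict:
  assumes "0 < x" "x < y" "0 < phi a K L x"
  shows "phi a K L x < phi a K L y"
proof -
  have px: "0 < x powr a" using assms by simp
  have hx: "0 < L - a * K + a * K * x"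
    using assms(3) px unfolding phi_def by (simp add: zero_less_mult_iff)
  have hxy: "L - a * K + a * K * x < L - a * K + a * K * y"
    using assms a1 K0 by simp
  have pxy: "x powr a < y powr a" using assms a1 by (intro powr_less_mono2) auto
  have "x powr a * (L - a * K + a * K * x) < y powr a * (L - a * K + a * K * y)"
    by (rule mult_strict_mono[OF pxy hxy]) (use px hx pxy in auto)
  then show ?thesis unfolding phi_def .
qed

lemma phi_cont: assumes "0 < x" shows "continuous_on {x..y} (phi a K L)"
  unfolding phi_def[abs_def] using assms by (intro continuous_intros) auto

lemma sst_ex: "\<exists>!s. 0 < s \<and> s < 1 \<and> phi a K L s = c"
proof -
  have L0: "0 < L" using c0 Lc by simp
  define s0 where "s0 = (c / (2 * L)) powr (1 / a)"
  have q01: "0 < c / (2 * L)" "c / (2 * L) < 1" using c0 Lc L0 by (auto simp: field_simps)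
  have s0p: "0 < s0" unfolding s0_def using q01 c0 L0 by simp
  have s01: "s0 < 1"
  proof -
    have "(c / (2 * L)) powr (1 / a) < 1 powr (1 / a)"
      using q01 a1 by (intro powr_less_mono2) auto
    then show ?thesis by (simp add: s0_def)
  qed
  have s0a: "s0 powr a = c / (2 * L)"
    unfolding s0_def using q01 a1 c0 L0 by (simp add: powr_powr)
  have "phi a K L s0 \<le> c / 2"
  proof (cases "L - a * K + a * K * s0 \<le> 0")
    case True
    then have "phi a K L s0 \<le> 0" unfolding phi_def by (simp add: mult_nonneg_nonpos)
    then show ?thesis using c0 by simp
  next
    case False
    have "L - a * K + a * K * s0 \<le> L" using s01 a1 K0 by (simp add: mult_left_le)
    then have "phi a K L s0 \<le> s0 powr a * L" unfolding phi_def by (intro mult_left_mono) auto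
    also have "\<dots> = c / 2" using s0a L0 by simp
    finally show ?thesis .
  qed
  then have lo: "phi a K L s0 \<le> c" using c0 by simp
  have hi: "c \<le> phi a K L 1" using Lc by (simp add: phi_def)
  obtain s where s: "s0 \<le> s" "s \<le> 1" "phi a K L s = c"
    using IVT'[of "phi a K L" s0 c 1, OF lo hi _ phi_cont[OF s0p]] s01 by auto
  have "s \<noteq> 1" using s(3) Lc by (auto simp: phi_def)
  then have ex: "0 < s \<and> s < 1 \<and> phi a K L s = c" using s s0p by auto
  show ?thesis
  proof (rule ex1I[of _ s])
    show "0 < s \<and> s < 1 \<and> phi a K L s = c" by (rule ex)
    fix t assume t: "0 < t \<and> t < 1 \<and> phi a K L t = c"
    show "t = s"
    proof (rule ccontr)
      assume "t \<noteq> s"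
      then consider "t < s" | "s < t" by linarith
      then show False
      proof cases
        case 1 then show False using phi_strict[of t s] t ex c0 by auto
      next
        case 2 then show False using phi_strict[of s t] t ex c0 by auto
      qed
    qed
  qed
qed

lemma sst: "0 < sst c a K L" "sst c a K L < 1" "phi a K L (sst c a K L) = c"
  using theI'[OF sst_ex] unfolding sst_def[symmetric] by auto

lemma phi_below: assumes "0 < x" "x < sst c a K L" shows "phi a K L x < c"
proof (cases "0 < phi a K L x")
  case True then show ?thesis using phi_strict[OF assms True] sst by simp
qed (use c0 in simp)

lemma phi_above: assumes "sst c a K L < x" shows "c < phi a K L x"
  using phi_strict[OF sst(1) assms] sst c0 by simp

lemma psi_deriv:
  assumes "0 < x"
  shows "(psi c a K L has_real_derivative ((a - 1) / x^2 * (c - phi a K L x))) (at x)"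
proof -
  define P2 where "P2 = x powr (a - 2)"
  have e1: "x powr (a - 1) = x * P2" unfolding P2_def using assms
    by (simp add: powr_mult_base)
  have e0: "x powr a = x * (x * P2)" unfolding P2_def using assms
    by (simp add: powr_mult_base)
  have d1: "((\<lambda>x. x powr a) has_real_derivative a * x powr (a - 1)) (at x)"
    using has_real_derivative_powr[OF assms] .
  have d2: "((\<lambda>x. x powr (a - 1)) has_real_derivative (a - 1) * x powr (a - 1 - 1)) (at x)"
    using has_real_derivative_powr[OF assms] .
  have d3: "((\<lambda>x. 1 / x) has_real_derivative - (1 / x^2)) (at x)"
    using assms by (auto intro!: derivative_eq_intros simp: power2_eq_square)
  have "(psi c a K L has_real_derivative
      (a - 1) * (K * x powr a - c) * (- (1 / x^2) - 0) + (a - 1) * (K * (a * x powr (a - 1)) - 0) * (1 / x - 1)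
      + (L - K) * (0 - (a - 1) * x powr (a - 1 - 1))) (at x)"
    unfolding psi_def[abs_def]
    by (intro DERIV_add DERIV_mult' DERIV_cmult DERIV_diff DERIV_const d1 d2 d3)
  moreover have "(a - 1) * (K * x powr a - c) * (- (1 / x^2) - 0) + (a - 1) * (K * (a * x powr (a - 1)) - 0) * (1 / x - 1)
      + (L - K) * (0 - (a - 1) * x powr (a - 1 - 1)) = (a - 1) / x^2 * (c - phi a K L x)"
    unfolding phi_def e1 e0 using assms by (simp add: P2_def[symmetric] field_simps power2_eq_square)
  ultimately show ?thesis by (rule DERIV_cong)
qed

lemma psi_cont: assumes "0 < x" shows "continuous_on {x..y} (psi c a K L)"
  unfolding psi_def[abs_def] using assms by (intro continuous_intros) auto

lemma psi_inc: assumes "0 < x" "x < sst c a K L" shows "psi c a K L x < psi c a K L (sst c a K L)"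
proof (rule DERIV_pos_imp_increasing_open[OF assms(2) _ psi_cont[OF assms(1)]])
  fix y assume y: "x < y" "y < sst c a K L"
  have "0 < (a - 1) / y^2 * (c - phi a K L y)"
    using phi_below[of y] y assms a1 by (intro mult_pos_pos) auto
  then show "\<exists>D. (psi c a K L has_real_derivative D) (at y) \<and> 0 < D"
    using psi_deriv[of y] y assms by auto
qed

lemma psi_dec: assumes "sst c a K L < x" shows "psi c a K L x < psi c a K L (sst c a K L)"
proof -
  have "psi c a K L (sst c a K L) > psi c a K L x"
  proof (rule DERIV_neg_imp_decreasing_open[OF assms _ psi_cont[OF sst(1)]])
    fix y assume y: "sst c a K L < y" "y < x"
    have "0 < y" using y sst(1) by simp
    have "(a - 1) / y^2 * (c - phi a K L y) < 0"
      using phi_above[of y] y a1 \<open>0 < y\<close> by (intro mult_pos_neg) auto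
    then show "\<exists>D. (psi c a K L has_real_derivative D) (at y) \<and> D < 0"
      using psi_deriv[of y] \<open>0 < y\<close> by auto
  qed
  then show ?thesis by simp
qed

lemma psi_one: "psi c a K L 1 = 0" by (simp add: psi_def)

lemma psi_sst_pos: "0 < psi c a K L (sst c a K L)"
  using psi_dec[of 1] sst psi_one by simp

lemma JR_deriv:
  assumes "-1 < z"
  shows "(JR a K v has_real_derivative (a - 1) * (K * (1 + z) powr (-a) - v)) (at z)"
proof -
  have p: "0 < 1 + z" using assms by simp
  have d0: "((\<lambda>z. 1 + z) has_real_derivative 1) (at z)" by (auto intro!: derivative_eq_intros)
  have d1: "((\<lambda>z. (1 + z) powr (1 - a)) has_real_derivative (1 - a) * (1 + z) powr (1 - a - 1) * 1) (at z)"
    using DERIV_fun_powr[OF d0 p, of "1 - a"] by simp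
  have "(JR a K v has_real_derivative K * (0 - (1 - a) * (1 + z) powr (1 - a - 1) * 1) - (a - 1) * v * 1) (at z)"
    unfolding JR_def[abs_def]
    by (intro DERIV_diff DERIV_cmult DERIV_const d1 DERIV_ident)
  moreover have "K * (0 - (1 - a) * (1 + z) powr (1 - a - 1) * 1) - (a - 1) * v * 1 = (a - 1) * (K * (1 + z) powr (-a) - v)"
    by (simp add: algebra_simps)
  ultimately show ?thesis by (rule DERIV_cong)
qed

lemma JR_cont: assumes "-1 < x" shows "continuous_on {x..y} (JR a K v)"
  unfolding JR_def[abs_def] using assms by (intro continuous_intros) auto

lemma zstar_nonneg: "0 \<le> zstar a K v" by (simp add: zstar_def)

lemma JR_opt:
  assumes v: "0 < v" and z: "0 \<le> z" "z \<noteq> zstar a K v"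
  shows "JR a K v z < JR a K v (zstar a K v)"
proof -
  define z0 where "z0 = (K / v) powr (1 / a) - 1"
  have z0p: "0 < 1 + z0" unfolding z0_def using v K0 by simp
  have key: "(1 + z0) powr (-a) = v / K"
  proof -
    have "(1 + z0) powr (-a) = (K / v) powr (1 / a * (-a))" unfolding z0_def by (simp add: powr_powr)
    also have "1 / a * (-a) = -1" using a1 by simp
    finally show ?thesis using v K0 by (simp add: powr_minus_divide)
  qed
  have pos: "0 < (a - 1) * (K * (1 + y) powr (-a) - v)" if "-1 < y" "y < z0" for y
  proof -
    have "(1 + z0) powr (-a) < (1 + y) powr (-a)"
      using that a1 by (intro powr_less_mono2_neg) auto
    then have "v < K * (1 + y) powr (-a)" using key K0 by (simp add: field_simps)
    then show ?thesis using a1 by simp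
  qed
  have neg: "(a - 1) * (K * (1 + y) powr (-a) - v) < 0" if "z0 < y" for y
  proof -
    have "(1 + y) powr (-a) < (1 + z0) powr (-a)"
      using that a1 z0p by (intro powr_less_mono2_neg) auto
    then have "K * (1 + y) powr (-a) < v" using key K0 by (simp add: field_simps)
    then show ?thesis using a1 by (simp add: mult_pos_neg)
  qed
  show ?thesis
  proof (cases "z0 \<le> 0")
    case True
    then have zs: "zstar a K v = 0" unfolding zstar_def z0_def[symmetric] by simp
    then have "0 < z" using z by simp
    have "JR a K v 0 > JR a K v z"
    proof (rule DERIV_neg_imp_decreasing_open[OF \<open>0 < z\<close> _ JR_cont])
      fix y assume "0 < y" "y < z"
      then show "\<exists>D. (JR a K v has_real_derivative D) (at y) \<and> D < 0"
        using JR_deriv[of y] neg[of y] True by auto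
    qed simp
    then show ?thesis using zs by simp
  next
    case False
    then have zs: "zstar a K v = z0" unfolding zstar_def z0_def[symmetric] by simp
    consider "z < z0" | "z0 < z" using z zs by linarith
    then show ?thesis
    proof cases
      case 1
      have "JR a K v z < JR a K v z0"
      proof (rule DERIV_pos_imp_increasing_open[OF 1 _ JR_cont])
        fix y assume "z < y" "y < z0"
        then show "\<exists>D. (JR a K v has_real_derivative D) (at y) \<and> 0 < D"
          using JR_deriv[of y] pos[of y] z by auto
      qed (use z in simp)
      then show ?thesis using zs by simp
    next
      case 2
      have "JR a K v z0 > JR a K v z"
      proof (rule DERIV_neg_imp_decreasing_open[OF 2 _ JR_cont])
        fix y assume "z0 < y" "y < z"
        then show "\<exists>D. (JR a K v has_real_derivative D) (at y) \<and> D < 0"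
          using JR_deriv[of y] neg[of y] z0p by auto
      qed (use z0p in simp)
      then show ?thesis using zs by simp
    qed
  qed
qed

lemma JR_zstar_ge: assumes "0 < v" shows "0 \<le> JR a K v (zstar a K v)"
proof (cases "zstar a K v = 0")
  case True then show ?thesis by (simp add: JR_def)
next
  case False
  then have "JR a K v 0 < JR a K v (zstar a K v)" using JR_opt[OF assms, of 0] by simp
  then show ?thesis by (simp add: JR_def)
qed

definition "wst = K * sst c a K L powr a"

lemma wst_props: "0 < wst" "wst < K" "(wst / K) powr (1 / a) = sst c a K L"
proof -
  have s: "0 < sst c a K L" "sst c a K L < 1" by (rule sst)+
  show "0 < wst" unfolding wst_def using s K0 by simp
  have "sst c a K L powr a < 1 powr a" using s a1 by (intro powr_less_mono2) auto
  then show "wst < K" unfolding wst_def using K0 by simp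
  show "(wst / K) powr (1 / a) = sst c a K L" unfolding wst_def using K0 s a1 by (simp add: powr_powr)
qed

lemma JM_lt:
  assumes "0 < v" "v < K"
  shows "JM c a K L v = psi c a K L ((v / K) powr (1 / a))"
proof -
  define x where "x = (v / K) powr (1 / a)"
  have x0: "0 < x" unfolding x_def using assms K0 by simp
  have x1: "x < 1"
  proof -
    have "(v / K) powr (1 / a) < 1 powr (1 / a)" using assms K0 a1 by (intro powr_less_mono2) auto
    then show ?thesis by (simp add: x_def)
  qed
  have xa: "x powr a = v / K" unfolding x_def using assms K0 a1 by (simp add: powr_powr)
  have vK: "v = K * x powr a" using xa K0 by simp
  have inv: "(K / v) powr (1 / a) = 1 / x"
  proof -
    have "K / v = inverse (v / K)" by simp
    then have "(K / v) powr (1 / a) = inverse ((v / K) powr (1 / a))" using inverse_powr[of "v / K" "1 / a"] by simp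
    then show ?thesis by (simp add: x_def divide_inverse)
  qed
  have zs: "zstar a K v = 1 / x - 1" unfolding zstar_def inv using x0 x1 by simp
  have pw: "(1 / x) powr (1 - a) = x powr (a - 1)"
  proof -
    have "(1 / x) powr (1 - a) = inverse (x powr (1 - a))" by (simp add: divide_inverse inverse_powr)
    also have "\<dots> = x powr (- (1 - a))" by (rule powr_minus[symmetric])
    finally show ?thesis by simp
  qed
  show ?thesis unfolding JM_def psi_def zs x_def[symmetric] using pw vK by simp
qed

lemma JM_ge: assumes "0 < v" "K \<le> v" shows "JM c a K L v = 0"
proof -
  have "(K / v) powr (1 / a) \<le> 1 powr (1 / a)" using assms K0 a1 by (intro powr_mono2) auto
  then have "zstar a K v = 0" unfolding zstar_def by simp
  then show ?thesis by (simp add: JM_def)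
qed

lemma JM_wst: "JM c a K L wst = psi c a K L (sst c a K L)"
  using JM_lt[OF wst_props(1,2)] wst_props(3) by simp

lemma JM_opt: assumes "0 < v" "v \<noteq> wst" shows "JM c a K L v < JM c a K L wst"
proof (cases "K \<le> v")
  case True
  then show ?thesis using JM_ge[OF assms(1) True] JM_wst psi_sst_pos by simp
next
  case False
  then have vK: "v < K" by simp
  define x where "x = (v / K) powr (1 / a)"
  have x0: "0 < x" unfolding x_def using assms K0 by simp
  have xa: "x powr a = v / K" unfolding x_def using assms K0 a1 by (simp add: powr_powr)
  have "x \<noteq> sst c a K L"
  proof
    assume "x = sst c a K L"
    then have "v = wst" using xa K0 unfolding wst_def by (simp add: field_simps)
    then show False using assms by simp
  qed
  then consider "x < sst c a K L" | "sst c a K L < x" by linarith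
  then have "psi c a K L x < psi c a K L (sst c a K L)"
    by cases (auto intro: psi_inc[OF x0] psi_dec)
  then show ?thesis using JM_lt[OF assms(1) vK] JM_wst by (simp add: x_def)
qed

lemma JM_wst_pos: "0 < JM c a K L wst"
  using JM_wst psi_sst_pos by simp

lemma zstar_wst: "(K / wst) powr (1 / a) - 1 = 1 / sst c a K L - 1"
  "zstar a K wst = 1 / sst c a K L - 1" "0 < 1 / sst c a K L - 1"
proof -
  have s: "0 < sst c a K L" "sst c a K L < 1" by (rule sst)+
  have "(K / wst) powr (1 / a) = inverse ((wst / K) powr (1 / a))"
    by (simp add: inverse_powr[symmetric])
  then show e: "(K / wst) powr (1 / a) - 1 = 1 / sst c a K L - 1"
    using wst_props(3) by (simp add: divide_inverse)
  show "0 < 1 / sst c a K L - 1" using s by simp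
  then show "zstar a K wst = 1 / sst c a K L - 1" unfolding zstar_def e by simp
qed

lemma val_R:
  "R0 + JR a K wst (zstar a K wst) = R0 + K - wst * (1 + a * (1 / sst c a K L - 1))"
proof -
  define x where "x = sst c a K L"
  have x: "0 < x" "x < 1" unfolding x_def by (rule sst)+
  define Q where "Q = x powr (a - 1)"
  have P: "x powr a = x * Q" unfolding Q_def using x by (simp add: powr_mult_base)
  have pw: "(1 + (1 / x - 1)) powr (1 - a) = Q"
  proof -
    have "(1 / x) powr (1 - a) = inverse (x powr (1 - a))" by (simp add: divide_inverse inverse_powr)
    also have "\<dots> = x powr (- (1 - a))" by (rule powr_minus[symmetric])
    finally show ?thesis by (simp add: Q_def)
  qed
  have w: "wst = K * (x * Q)" unfolding wst_def x_def[symmetric] P ..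
  show ?thesis unfolding JR_def zstar_wst(2) unfolding x_def[symmetric] pw w using x
    by (simp add: field_simps)
qed

lemma val_M:
  "M0 + JM c a K L wst = M0 + (L - K) + wst - c * (1 + a * (1 / sst c a K L - 1))"
proof -
  define x where "x = sst c a K L"
  have x: "0 < x" "x < 1" unfolding x_def by (rule sst)+
  define Q where "Q = x powr (a - 1)"
  have P: "x powr a = x * Q" unfolding Q_def using x by (simp add: powr_mult_base)
  have pw: "(1 + (1 / x - 1)) powr (1 - a) = Q"
  proof -
    have "(1 / x) powr (1 - a) = inverse (x powr (1 - a))" by (simp add: divide_inverse inverse_powr)
    also have "\<dots> = x powr (- (1 - a))" by (rule powr_minus[symmetric])
    finally show ?thesis by (simp add: Q_def)
  qed
  have w: "wst = K * (x * Q)" unfolding wst_def x_def[symmetric] P ..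
  have foc: "c = x * Q * (L - a * K + a * K * x)" using sst(3) unfolding phi_def x_def[symmetric] P by simp
  show ?thesis unfolding JM_def zstar_wst(2) unfolding x_def[symmetric] pw w
    apply (subst (1 2) foc)
    using x by (simp add: field_simps)
qed

lemma val_w:
  "1 - 1 / a + c / (a * wst) - (L - K) / (a * K) = sst c a K L"
proof -
  define x where "x = sst c a K L"
  have x: "0 < x" "x < 1" unfolding x_def by (rule sst)+
  define P where "P = x powr a"
  have P0: "0 < P" unfolding P_def using x by simp
  have w: "wst = K * P" unfolding wst_def x_def[symmetric] P_def ..
  have foc: "c = P * (L - a * K + a * K * x)" using sst(3) unfolding phi_def x_def[symmetric] P_def by simp
  show ?thesis unfolding x_def[symmetric] w
    apply (subst foc)
    using P0 K0 a1 by (simp add: field_simps)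
qed

end


definition stage :: "real \<Rightarrow> real \<Rightarrow> real \<Rightarrow> real \<times> real \<Rightarrow> real \<times> real \<Rightarrow> real \<times> real" where
  "stage p c a X Y = (let K = p + fst Y - fst X; L = K + snd Y - snd X; s = sst c a K L;
     w = wst c a K L; z = 1 / s - 1 in (fst Y + p - w * (1 + a * z), snd Y + w - c * (1 + a * z)))"

fun vals :: "real \<Rightarrow> real \<Rightarrow> nat \<Rightarrow> real \<Rightarrow> real \<times> real" where
  "vals p c 0 a = (0, 0)"
| "vals p c (Suc n) a = stage p c a (vals p c n a) (vals p c n (a + 1))"

lemma stage_eq:
  "stage p c a X Y = (fst Y + p - wst c a (p + fst Y - fst X) (p + fst Y - fst X + snd Y - snd X)
        * (1 + a * (1 / sst c a (p + fst Y - fst X) (p + fst Y - fst X + snd Y - snd X) - 1)),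
     snd Y + wst c a (p + fst Y - fst X) (p + fst Y - fst X + snd Y - snd X)
        - c * (1 + a * (1 / sst c a (p + fst Y - fst X) (p + fst Y - fst X + snd Y - snd X) - 1)))"
  by (simp add: stage_def Let_def)

lemma stage_facts:
  assumes c0: "0 < c" and a1: "1 < a" and K0: "0 < p + fst Y - fst X"
    and Lc: "c < p + fst Y - fst X + snd Y - snd X"
  shows "fst X \<le> fst (stage p c a X Y)" "fst (stage p c a X Y) < fst Y + p"
    "fst X + snd X \<le> fst (stage p c a X Y) + snd (stage p c a X Y)"
    "fst (stage p c a X Y) + snd (stage p c a X Y) < fst Y + snd Y + p - c"
proof -
  define K where "K = p + fst Y - fst X"
  define L where "L = p + fst Y - fst X + snd Y - snd X"
  have K0': "0 < K" and Lc': "c < L" using K0 Lc by (simp_all add: K_def L_def)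
  have LK: "L = K + snd Y - snd X" by (simp add: K_def L_def)
  define w where "w = wst c a K L"
  define z where "z = 1 / sst c a K L - 1"
  have st: "stage p c a X Y = (fst Y + p - w * (1 + a * z), snd Y + w - c * (1 + a * z))"
    unfolding stage_eq w_def z_def K_def L_def ..
  have w0: "0 < w" unfolding w_def by (rule wst_props(1)[OF c0 a1 K0' Lc'])
  have z0: "0 < z" unfolding z_def by (rule zstar_wst(3)[OF c0 a1 K0' Lc'])
  have az: "0 < a * z" using a1 z0 by simp
  have R: "fst X + JR a K w (zstar a K w) = fst Y + p - w * (1 + a * z)"
    using val_R[OF c0 a1 K0' Lc', of "fst X"] unfolding w_def[symmetric] z_def[symmetric]
    by (simp add: K_def)
  have M: "snd X + JM c a K L w = snd Y + w - c * (1 + a * z)"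
    using val_M[OF c0 a1 K0' Lc', of "snd X"] unfolding w_def[symmetric] z_def[symmetric]
    by (simp add: LK)
  have j1: "0 \<le> JR a K w (zstar a K w)" by (rule JR_zstar_ge[OF c0 a1 K0' Lc' w0])
  have j2: "0 < JM c a K L w" unfolding w_def by (rule JM_wst_pos[OF c0 a1 K0' Lc'])
  show "fst X \<le> fst (stage p c a X Y)" using R j1 st by simp
  show "fst (stage p c a X Y) < fst Y + p" using st w0 az by (simp add: mult_pos_pos)
  show "fst X + snd X \<le> fst (stage p c a X Y) + snd (stage p c a X Y)" using R M j1 j2 st by simp
  have "0 < w * (a * z) + c * (a * z)" using w0 az c0 by (simp add: mult_pos_pos add_pos_pos)
  then show "fst (stage p c a X Y) + snd (stage p c a X Y) < fst Y + snd Y + p - c"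
    using st by (simp add: algebra_simps)
qed

lemma vals_inv:
  assumes c0: "0 < c" and cp: "c < p" and a1: "1 < a"
  shows "0 < p + fst (vals p c n (a + 1)) - fst (vals p c n a) \<and>
    c < p + fst (vals p c n (a + 1)) - fst (vals p c n a) + snd (vals p c n (a + 1)) - snd (vals p c n a)"
  using a1
proof (induction n arbitrary: a)
  case 0
  then show ?case using c0 cp by simp
next
  case (Suc n)
  have a2: "1 < a + 1" using Suc.prems by simp
  note IH1 = Suc.IH[OF Suc.prems] and IH2 = Suc.IH[OF a2]
  have A: "fst (stage p c a (vals p c n a) (vals p c n (a + 1))) < fst (vals p c n (a + 1)) + p"
    "fst (stage p c a (vals p c n a) (vals p c n (a + 1))) + snd (stage p c a (vals p c n a) (vals p c n (a + 1)))
      < fst (vals p c n (a + 1)) + snd (vals p c n (a + 1)) + p - c"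
    using stage_facts[OF c0 Suc.prems] IH1 by auto
  have B: "fst (vals p c n (a + 1)) \<le> fst (stage p c (a + 1) (vals p c n (a + 1)) (vals p c n (a + 1 + 1)))"
    "fst (vals p c n (a + 1)) + snd (vals p c n (a + 1)) \<le>
       fst (stage p c (a + 1) (vals p c n (a + 1)) (vals p c n (a + 1 + 1))) + snd (stage p c (a + 1) (vals p c n (a + 1)) (vals p c n (a + 1 + 1)))"
    using stage_facts[OF c0 a2] IH2 by auto
  show ?case using A B by simp
qed

lemma Aset_gt: "1 < a1 \<Longrightarrow> a \<in> Aset a1 \<Longrightarrow> 1 < a"
  by (auto simp: Aset_def)

lemma Aset_suc: assumes "a \<in> Aset a1" shows "a + 1 \<in> Aset a1"
proof -
  obtain n where "a = a1 + real n" using assms by (auto simp: Aset_def)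
  then have "a + 1 = a1 + real (Suc n)" by simp
  then show ?thesis unfolding Aset_def by blast
qed

lemma zstar_nn: "0 \<le> zstar a K v" by (simp add: zstar_def)

definition fRw :: "real \<Rightarrow> real \<Rightarrow> nat \<Rightarrow> nat \<Rightarrow> real \<Rightarrow> real" where
  "fRw p c T t a = fst (vals p c (Suc T - t) a)"
definition fMw :: "real \<Rightarrow> real \<Rightarrow> nat \<Rightarrow> nat \<Rightarrow> real \<Rightarrow> real" where
  "fMw p c T t a = snd (vals p c (Suc T - t) a)"
definition Kf :: "real \<Rightarrow> real \<Rightarrow> nat \<Rightarrow> nat \<Rightarrow> real \<Rightarrow> real" where
  "Kf p c T t a = p + fRw p c T (Suc t) (a + 1) - fRw p c T (Suc t) a"
definition Lf :: "real \<Rightarrow> real \<Rightarrow> nat \<Rightarrow> nat \<Rightarrow> real \<Rightarrow> real" where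
  "Lf p c T t a = Kf p c T t a + fMw p c T (Suc t) (a + 1) - fMw p c T (Suc t) a"
definition ww :: "real \<Rightarrow> real \<Rightarrow> nat \<Rightarrow> nat \<Rightarrow> real \<Rightarrow> real" where
  "ww p c T t a = wst c a (Kf p c T t a) (Lf p c T t a)"
definition zw :: "real \<Rightarrow> real \<Rightarrow> nat \<Rightarrow> nat \<Rightarrow> real \<Rightarrow> real \<Rightarrow> real" where
  "zw p c T t a v = zstar a (Kf p c T t a) v"
definition fRhw :: "real \<Rightarrow> real \<Rightarrow> nat \<Rightarrow> nat \<Rightarrow> real \<Rightarrow> real \<Rightarrow> real" where
  "fRhw p c T t a v = (if t \<le> T then sPiR p v (zw p c T t a v) a + calE (fRw p c T (Suc t)) (zw p c T t a v) a else 0)"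

lemma fRw_end: "fRw p c T (Suc T) a = 0" and fMw_end: "fMw p c T (Suc T) a = 0"
  by (simp_all add: fRw_def fMw_def)

lemma KL_pos:
  assumes "0 < c" "c < p" "1 < a"
  shows "0 < Kf p c T t a" "c < Lf p c T t a"
  using vals_inv[OF assms, of "Suc T - Suc t"]
  by (simp_all add: Kf_def Lf_def fRw_def fMw_def)

lemma vals_step:
  assumes "t \<le> T"
  shows "vals p c (Suc T - t) a = stage p c a (vals p c (Suc T - Suc t) a) (vals p c (Suc T - Suc t) (a + 1))"
proof -
  have "Suc T - t = Suc (Suc T - Suc t)" using assms by simp
  then show ?thesis by simp
qed

lemma objR:
  assumes "1 < a" "0 \<le> z"
  shows "sPiR p v z a + calE f z a = f a + JR a (p + f (a + 1) - f a) v z"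
  using sobjR[OF assms] by (simp add: JR_def)

lemma objM:
  assumes "1 < a" "0 < v"
  shows "sPiM c v (zstar a K v) a + calE g (zstar a K v) a = g a + JM c a K (K + g (a + 1) - g a) v"
  using sobjM[OF assms(1) zstar_nn] by (simp add: JM_def)

lemma W_stage:
  assumes c0: "0 < c" and cp: "c < p" and tT: "t \<le> T" and a1: "1 < a"
  shows "fRw p c T t a = fRw p c T (Suc t) a + JR a (Kf p c T t a) (ww p c T t a) (zw p c T t a (ww p c T t a))"
    "fMw p c T t a = fMw p c T (Suc t) a + JM c a (Kf p c T t a) (Lf p c T t a) (ww p c T t a)"
    "fRw p c T t a = p - ww p c T t a * (1 + a * zw p c T t a (ww p c T t a)) + fRw p c T (Suc t) (a + 1)"
    "fMw p c T t a = ww p c T t a - c * (1 + a * zw p c T t a (ww p c T t a)) + fMw p c T (Suc t) (a + 1)"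
proof -
  note KL = KL_pos[OF c0 cp a1, of T t]
  define K where "K = Kf p c T t a"
  define L where "L = Lf p c T t a"
  have K0: "0 < K" and Lc: "c < L" using KL by (simp_all add: K_def L_def)
  have zz: "zw p c T t a (ww p c T t a) = 1 / sst c a K L - 1"
    unfolding zw_def ww_def K_def[symmetric] L_def[symmetric] by (rule zstar_wst(2)[OF c0 a1 K0 Lc])
  have st: "fRw p c T t a = fRw p c T (Suc t) (a + 1) + p - ww p c T t a * (1 + a * (1 / sst c a K L - 1))"
           "fMw p c T t a = fMw p c T (Suc t) (a + 1) + ww p c T t a - c * (1 + a * (1 / sst c a K L - 1))"
    unfolding fRw_def fMw_def vals_step[OF tT] stage_eq ww_def K_def L_def Kf_def Lf_def
    by simp_all
  show "fRw p c T t a = p - ww p c T t a * (1 + a * zw p c T t a (ww p c T t a)) + fRw p c T (Suc t) (a + 1)"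
       "fMw p c T t a = ww p c T t a - c * (1 + a * zw p c T t a (ww p c T t a)) + fMw p c T (Suc t) (a + 1)"
    using st zz by simp_all
  have R: "fRw p c T (Suc t) a + JR a K (wst c a K L) (zstar a K (wst c a K L))
      = fRw p c T (Suc t) a + K - wst c a K L * (1 + a * (1 / sst c a K L - 1))"
    by (rule val_R[OF c0 a1 K0 Lc])
  show "fRw p c T t a = fRw p c T (Suc t) a + JR a (Kf p c T t a) (ww p c T t a) (zw p c T t a (ww p c T t a))"
    using R st(1) unfolding zw_def ww_def K_def[symmetric] L_def[symmetric]
    by (simp add: K_def Kf_def)
  have M: "fMw p c T (Suc t) a + JM c a K L (wst c a K L)
      = fMw p c T (Suc t) a + (L - K) + wst c a K L - c * (1 + a * (1 / sst c a K L - 1))"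
    by (rule val_M[OF c0 a1 K0 Lc])
  show "fMw p c T t a = fMw p c T (Suc t) a + JM c a (Kf p c T t a) (Lf p c T t a) (ww p c T t a)"
    using M st(2) unfolding ww_def K_def[symmetric] L_def[symmetric]
    by (simp add: K_def L_def Lf_def)
qed

lemma smps_exists:
  assumes c0: "0 < c" and cp: "c < p" and a1: "1 < a1"
  shows "smps_values p c T a1 (ww p c T) (zw p c T) (fRw p c T) (fMw p c T) (fRhw p c T)"
  unfolding smps_values_def
proof (intro conjI ballI)
  fix a assume "a \<in> Aset a1"
  show "fRw p c T (Suc T) a = 0" "fMw p c T (Suc T) a = 0" by (simp_all add: fRw_end fMw_end)
  fix v assume "v \<in> Wset"
  show "fRhw p c T (Suc T) a v = 0" by (simp add: fRhw_def)
next
  fix t a v assume t: "t \<in> {1..T}" and a: "a \<in> Aset a1" and v: "v \<in> Wset"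
  have a1': "1 < a" using Aset_gt[OF a1 a] .
  have tT: "t \<le> T" using t by simp
  have v0: "0 < v" using v by (simp add: Wset_def)
  note KL = KL_pos[OF c0 cp a1', of T t]
  show "zw p c T t a v \<in> Qset" by (simp add: Qset_def zw_def zstar_nn)
  show "fRhw p c T t a v = sPiR p v (zw p c T t a v) a + calE (fRw p c T (Suc t)) (zw p c T t a v) a"
    using tT by (simp add: fRhw_def)
  show "sPiR p v z' a + calE (fRw p c T (Suc t)) z' a
        \<le> sPiR p v (zw p c T t a v) a + calE (fRw p c T (Suc t)) (zw p c T t a v) a"
    if "z' \<in> Qset" for z'
  proof -
    from that have z'0: "0 \<le> z'" by (simp add: Qset_def)
    have "JR a (Kf p c T t a) v z' \<le> JR a (Kf p c T t a) v (zstar a (Kf p c T t a) v)"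
      using JR_opt[OF c0 a1' KL v0 z'0] by (cases "z' = zstar a (Kf p c T t a) v") (auto simp: less_imp_le)
    then show "sPiR p v z' a + calE (fRw p c T (Suc t)) z' a
        \<le> sPiR p v (zw p c T t a v) a + calE (fRw p c T (Suc t)) (zw p c T t a v) a"
      unfolding objR[OF a1' z'0] objR[OF a1' zstar_nn] zw_def Kf_def by simp
  qed
next
  fix t a assume t: "t \<in> {1..T}" and a: "a \<in> Aset a1"
  have a1': "1 < a" using Aset_gt[OF a1 a] .
  have tT: "t \<le> T" using t by simp
  note KL = KL_pos[OF c0 cp a1', of T t]
  have w0: "0 < ww p c T t a" unfolding ww_def by (rule wst_props(1)[OF c0 a1' KL])
  show "ww p c T t a \<in> Wset" using w0 by (simp add: Wset_def)
  have LK: "Lf p c T t a = Kf p c T t a + fMw p c T (Suc t) (a + 1) - fMw p c T (Suc t) a"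
    by (simp add: Lf_def)
  have oM: "sPiM c v (zw p c T t a v) a + calE (fMw p c T (Suc t)) (zw p c T t a v) a
     = fMw p c T (Suc t) a + JM c a (Kf p c T t a) (Lf p c T t a) v" if "0 < v" for v
    unfolding zw_def objM[OF a1' that] LK ..
  show "sPiM c v (zw p c T t a v) a + calE (fMw p c T (Suc t)) (zw p c T t a v) a
       \<le> sPiM c (ww p c T t a) (zw p c T t a (ww p c T t a)) a + calE (fMw p c T (Suc t)) (zw p c T t a (ww p c T t a)) a"
    if "v \<in> Wset" for v
  proof -
    from that have v0: "0 < v" by (simp add: Wset_def)
    have "JM c a (Kf p c T t a) (Lf p c T t a) v \<le> JM c a (Kf p c T t a) (Lf p c T t a) (ww p c T t a)"
      using JM_opt[OF c0 a1' KL v0] by (cases "v = ww p c T t a") (auto simp: ww_def less_imp_le)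
    then show "sPiM c v (zw p c T t a v) a + calE (fMw p c T (Suc t)) (zw p c T t a v) a
       \<le> sPiM c (ww p c T t a) (zw p c T t a (ww p c T t a)) a + calE (fMw p c T (Suc t)) (zw p c T t a (ww p c T t a)) a"
      unfolding oM[OF v0] oM[OF w0] by simp
  qed
  show "fMw p c T t a = sPiM c (ww p c T t a) (zw p c T t a (ww p c T t a)) a + calE (fMw p c T (Suc t)) (zw p c T t a (ww p c T t a)) a"
    unfolding oM[OF w0] by (rule W_stage(2)[OF c0 cp tT a1'])
next
  fix t a assume t: "t \<in> {1..T}" and a: "a \<in> Aset a1"
  have a1': "1 < a" using Aset_gt[OF a1 a] .
  have tT: "t \<le> T" using t by simp
  show "fRw p c T t a = fRhw p c T t a (ww p c T t a)"
    unfolding fRhw_def using tT objR[OF a1' zstar_nn] W_stage(1)[OF c0 cp tT a1']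
    by (simp add: zw_def Kf_def)
qed

lemma fR_sum:
  assumes c0: "0 < c" and cp: "c < p"
  shows "t \<le> T \<Longrightarrow> 1 < a \<Longrightarrow> fRw p c T t a = (\<Sum>i=0..T-t. p - ww p c T (t+i) (a + real i)
                     * (1 + (a + real i) * zw p c T (t+i) (a + real i) (ww p c T (t+i) (a + real i))))"
proof (induction "T - t" arbitrary: t a)
  case 0
  then have tT: "t = T" by simp
  show ?case using W_stage(3)[OF c0 cp _ 0(3), of t T] tT by (simp add: fRw_end)
next
  case (Suc n)
  have tT: "Suc t \<le> T" "t \<le> T" using Suc.hyps(2) Suc.prems by auto
  have n: "n = T - Suc t" using Suc.hyps(2) by simp
  have a2: "1 < a + 1" using Suc.prems by simp
  have IH: "fRw p c T (Suc t) (a + 1) = (\<Sum>i=0..T - Suc t. p - ww p c T (Suc t + i) (a + 1 + real i)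
                     * (1 + (a + 1 + real i) * zw p c T (Suc t + i) (a + 1 + real i) (ww p c T (Suc t + i) (a + 1 + real i))))"
    by (rule Suc.hyps(1)[OF n tT(1) a2])
  have TT: "T - t = Suc (T - Suc t)" using tT by simp
  show ?case
    unfolding W_stage(3)[OF c0 cp tT(2) Suc.prems(2)] IH TT sum.atLeast0_atMost_Suc_shift
    by (simp add: algebra_simps)
qed

lemma fM_sum:
  assumes c0: "0 < c" and cp: "c < p"
  shows "t \<le> T \<Longrightarrow> 1 < a \<Longrightarrow> fMw p c T t a = (\<Sum>i=0..T-t. ww p c T (t+i) (a + real i)
                     - c * (1 + (a + real i) * zw p c T (t+i) (a + real i) (ww p c T (t+i) (a + real i))))"
proof (induction "T - t" arbitrary: t a)
  case 0
  then have tT: "t = T" by simp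
  show ?case using W_stage(4)[OF c0 cp _ 0(3), of t T] tT by (simp add: fMw_end)
next
  case (Suc n)
  have tT: "Suc t \<le> T" "t \<le> T" using Suc.hyps(2) Suc.prems by auto
  have n: "n = T - Suc t" using Suc.hyps(2) by simp
  have a2: "1 < a + 1" using Suc.prems by simp
  have IH: "fMw p c T (Suc t) (a + 1) = (\<Sum>i=0..T - Suc t. ww p c T (Suc t + i) (a + 1 + real i)
                     - c * (1 + (a + 1 + real i) * zw p c T (Suc t + i) (a + 1 + real i) (ww p c T (Suc t + i) (a + 1 + real i))))"
    by (rule Suc.hyps(1)[OF n tT(1) a2])
  have TT: "T - t = Suc (T - Suc t)" using tT by simp
  show ?case
    unfolding W_stage(4)[OF c0 cp tT(2) Suc.prems(2)] IH TT sum.atLeast0_atMost_Suc_shift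
    by (simp add: algebra_simps)
qed

lemma closed_w:
  assumes c0: "0 < c" and cp: "c < p" and a1: "1 < a"
  shows "ww p c T t a = (p + fRw p c T (Suc t) (a + 1) - fRw p c T (Suc t) a)
                * (1 - 1 / a + c / (a * ww p c T t a)
                   - (fMw p c T (Suc t) (a + 1) - fMw p c T (Suc t) a)
                     / (a * (p + fRw p c T (Suc t) (a + 1) - fRw p c T (Suc t) a))) powr a"
proof -
  note KL = KL_pos[OF c0 cp a1, of T t]
  have "1 - 1 / a + c / (a * ww p c T t a) - (Lf p c T t a - Kf p c T t a) / (a * Kf p c T t a)
      = sst c a (Kf p c T t a) (Lf p c T t a)"
    unfolding ww_def by (rule val_w[OF c0 a1 KL])
  moreover have "Lf p c T t a - Kf p c T t a = fMw p c T (Suc t) (a + 1) - fMw p c T (Suc t) a"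
    by (simp add: Lf_def)
  ultimately show ?thesis
    unfolding Kf_def[symmetric] using wst_def[OF c0 a1 KL] by (simp add: ww_def)
qed

lemma closed_zw:
  assumes c0: "0 < c" and cp: "c < p" and a1: "1 < a"
  shows "zw p c T t a (ww p c T t a) = ((p + fRw p c T (Suc t) (a + 1) - fRw p c T (Suc t) a) / ww p c T t a) powr (1 / a) - 1"
  using zstar_wst(1,2)[OF c0 a1 KL_pos[OF c0 cp a1, of T t]] by (simp add: zw_def ww_def Kf_def)

lemma calE_cong: "f a = g a \<Longrightarrow> f (a + 1) = g (a + 1) \<Longrightarrow> calE f z a = calE g z a"
  by (simp add: calE_def)

lemma smps_stage_unique:
  assumes c0: "0 < c" and cp: "c < p" and a1: "1 < a1"
    and S: "smps_values p c T a1 w' z' fR' fM' fRh'"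
    and t: "t \<in> {1..T}"
    and IH: "\<forall>a\<in>Aset a1. fR' (Suc t) a = fRw p c T (Suc t) a \<and> fM' (Suc t) a = fMw p c T (Suc t) a"
    and a: "a \<in> Aset a1"
  shows "(\<forall>v\<in>Wset. z' t a v = zw p c T t a v) \<and> w' t a = ww p c T t a
      \<and> fR' t a = fRw p c T t a \<and> fM' t a = fMw p c T t a"
proof -
  have a1': "1 < a" using Aset_gt[OF a1 a] .
  have tT: "t \<le> T" using t by simp
  have aa: "a + 1 \<in> Aset a1" by (rule Aset_suc[OF a])
  note KL = KL_pos[OF c0 cp a1', of T t]
  have eR: "calE (fR' (Suc t)) z a = calE (fRw p c T (Suc t)) z a" for z
    using IH a aa by (intro calE_cong) auto
  have eM: "calE (fM' (Suc t)) z a = calE (fMw p c T (Suc t)) z a" for z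
    using IH a aa by (intro calE_cong) auto
  have S2: "\<forall>v\<in>Wset. z' t a v \<in> Qset \<and>
        (\<forall>z''\<in>Qset. sPiR p v z'' a + calE (fR' (Suc t)) z'' a
                    \<le> sPiR p v (z' t a v) a + calE (fR' (Suc t)) (z' t a v) a) \<and>
        fRh' t a v = sPiR p v (z' t a v) a + calE (fR' (Suc t)) (z' t a v) a"
    using S t a unfolding smps_values_def by blast
  have S3: "w' t a \<in> Wset \<and>
        (\<forall>v\<in>Wset. sPiM c v (z' t a v) a + calE (fM' (Suc t)) (z' t a v) a
                   \<le> sPiM c (w' t a) (z' t a (w' t a)) a + calE (fM' (Suc t)) (z' t a (w' t a)) a) \<and>
        fM' t a = sPiM c (w' t a) (z' t a (w' t a)) a + calE (fM' (Suc t)) (z' t a (w' t a)) a"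
    using S t a unfolding smps_values_def by blast
  have S4: "fR' t a = fRh' t a (w' t a)"
    using S t a unfolding smps_values_def by blast
  have oR: "sPiR p v z a + calE (fR' (Suc t)) z a = fRw p c T (Suc t) a + JR a (Kf p c T t a) v z"
    if "0 \<le> z" for v z
    unfolding eR objR[OF a1' that] Kf_def ..
  have zeq: "z' t a v = zw p c T t a v" if v: "v \<in> Wset" for v
  proof (rule ccontr)
    assume ne: "z' t a v \<noteq> zw p c T t a v"
    have v0: "0 < v" using v by (simp add: Wset_def)
    have q: "0 \<le> z' t a v" using S2 v by (simp add: Qset_def)
    have "JR a (Kf p c T t a) v (z' t a v) < JR a (Kf p c T t a) v (zw p c T t a v)"
      using JR_opt[OF c0 a1' KL v0 q] ne by (simp add: zw_def)
    moreover have "sPiR p v (zw p c T t a v) a + calE (fR' (Suc t)) (zw p c T t a v) a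
                    \<le> sPiR p v (z' t a v) a + calE (fR' (Suc t)) (z' t a v) a"
      using S2 v by (simp add: Qset_def zw_def zstar_nn)
    ultimately show False unfolding oR[OF q] oR[OF zstar_nn, of v "a" "Kf p c T t a", folded zw_def] by simp
  qed
  have LK: "Lf p c T t a = Kf p c T t a + fMw p c T (Suc t) (a + 1) - fMw p c T (Suc t) a"
    by (simp add: Lf_def)
  have oM: "sPiM c v (z' t a v) a + calE (fM' (Suc t)) (z' t a v) a
     = fMw p c T (Suc t) a + JM c a (Kf p c T t a) (Lf p c T t a) v" if "v \<in> Wset" for v
  proof -
    have v0: "0 < v" using that by (simp add: Wset_def)
    show ?thesis unfolding zeq[OF that] eM zw_def objM[OF a1' v0] LK ..
  qed
  have w'W: "w' t a \<in> Wset" using S3 by blast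
  have w0: "0 < ww p c T t a" unfolding ww_def by (rule wst_props(1)[OF c0 a1' KL])
  have wW: "ww p c T t a \<in> Wset" using w0 by (simp add: Wset_def)
  have weq: "w' t a = ww p c T t a"
  proof (rule ccontr)
    assume ne: "w' t a \<noteq> ww p c T t a"
    have "JM c a (Kf p c T t a) (Lf p c T t a) (w' t a) < JM c a (Kf p c T t a) (Lf p c T t a) (ww p c T t a)"
      using JM_opt[OF c0 a1' KL, of "w' t a"] w'W ne by (simp add: Wset_def ww_def)
    moreover have "sPiM c (ww p c T t a) (z' t a (ww p c T t a)) a + calE (fM' (Suc t)) (z' t a (ww p c T t a)) a
                   \<le> sPiM c (w' t a) (z' t a (w' t a)) a + calE (fM' (Suc t)) (z' t a (w' t a)) a"
      using S3 wW by blast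
    ultimately show False unfolding oM[OF w'W] oM[OF wW] by simp
  qed
  have fMeq: "fM' t a = fMw p c T t a"
    using S3 oM[OF w'W] weq W_stage(2)[OF c0 cp tT a1'] by simp
  have fReq: "fR' t a = fRw p c T t a"
  proof -
    have "fR' t a = sPiR p (w' t a) (z' t a (w' t a)) a + calE (fR' (Suc t)) (z' t a (w' t a)) a"
      using S4 S2 w'W by simp
    also have "\<dots> = fRw p c T (Suc t) a + JR a (Kf p c T t a) (ww p c T t a) (zw p c T t a (ww p c T t a))"
      unfolding weq zeq[OF wW] oR[OF zstar_nn, of _ a "Kf p c T t a" "ww p c T t a", folded zw_def] ..
    also have "\<dots> = fRw p c T t a" using W_stage(1)[OF c0 cp tT a1'] by simp
    finally show ?thesis .
  qed
  show ?thesis using zeq weq fMeq fReq by blast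
qed

lemma smps_unique:
  assumes c0: "0 < c" and cp: "c < p" and a1: "1 < a1"
    and S: "smps_values p c T a1 w' z' fR' fM' fRh'"
  shows "\<forall>t\<in>{1..T}. \<forall>a\<in>Aset a1. w' t a = ww p c T t a \<and> (\<forall>v\<in>Wset. z' t a v = zw p c T t a v)"
proof -
  have V: "k \<le> T \<Longrightarrow> \<forall>a\<in>Aset a1. fR' (Suc T - k) a = fRw p c T (Suc T - k) a \<and> fM' (Suc T - k) a = fMw p c T (Suc T - k) a" for k
  proof (induction k)
    case 0
    then show ?case using S unfolding smps_values_def by (simp add: fRw_end fMw_end)
  next
    case (Suc k)
    have t: "Suc T - Suc k \<in> {1..T}" using Suc.prems by auto
    have st: "Suc (Suc T - Suc k) = Suc T - k" using Suc.prems by simp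
    have IH: "\<forall>a\<in>Aset a1. fR' (Suc (Suc T - Suc k)) a = fRw p c T (Suc (Suc T - Suc k)) a \<and> fM' (Suc (Suc T - Suc k)) a = fMw p c T (Suc (Suc T - Suc k)) a"
      unfolding st using Suc.IH Suc.prems by simp
    show ?case using smps_stage_unique[OF c0 cp a1 S t IH] by blast
  qed
  show ?thesis
  proof (intro ballI)
    fix t a assume t: "t \<in> {1..T}" and a: "a \<in> Aset a1"
    have k: "T - t \<le> T" by simp
    have st: "Suc T - (T - t) = Suc t" using t by auto
    have IH: "\<forall>a\<in>Aset a1. fR' (Suc t) a = fRw p c T (Suc t) a \<and> fM' (Suc t) a = fMw p c T (Suc t) a"
      using V[OF k] unfolding st .
    show "w' t a = ww p c T t a \<and> (\<forall>v\<in>Wset. z' t a v = zw p c T t a v)"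
      using smps_stage_unique[OF c0 cp a1 S t IH a] by blast
  qed
qed

lemma mpe_objR:
  assumes "1 < a" "0 < b" "0 \<le> q"
  shows "PiR p v q a b + Epred a b (\<lambda>d. case Phi a b q d of (a', b') \<Rightarrow> b' * g a' / (a' - 1))
       = b / (a - 1) * (sPiR p v (q / b) a + calE g (q / b) a)"
  unfolding PiR_scale[OF assms] E_V(2)[OF assms] by (simp add: algebra_simps)

lemma mpe_objM:
  assumes "1 < a" "0 < b" "0 \<le> q"
  shows "PiM c v q + Epred a b (\<lambda>d. case Phi a b q d of (a', b') \<Rightarrow> b' * g a' / (a' - 1))
       = b / (a - 1) * (sPiM c v (q / b) a + calE g (q / b) a)"
  unfolding PiM_scale[OF assms(1,2)] E_V(2)[OF assms] by (simp add: algebra_simps)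

lemma Bset_pos: "0 < b1 \<Longrightarrow> b \<in> Bset b1 \<Longrightarrow> 0 < b"
  by (simp add: Bset_def)

lemma mpe_exists:
  assumes c0: "0 < c" and cp: "c < p" and a1: "1 < a1" and b1: "0 < b1"
  shows "mpe_values p c T a1 b1 (\<lambda>t a b. ww p c T t a) (\<lambda>t a b v. b * zw p c T t a v)
     (\<lambda>t a b. b * fRw p c T t a / (a - 1)) (\<lambda>t a b. b * fMw p c T t a / (a - 1))
     (\<lambda>t a b v. b * fRhw p c T t a v / (a - 1))"
  unfolding mpe_values_def
proof (intro conjI ballI)
  fix a b assume "a \<in> Aset a1" "b \<in> Bset b1"
  show "b * fRw p c T (Suc T) a / (a - 1) = 0" "b * fMw p c T (Suc T) a / (a - 1) = 0"
    by (simp_all add: fRw_end fMw_end)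
  fix v assume "v \<in> Wset"
  show "b * fRhw p c T (Suc T) a v / (a - 1) = 0" by (simp add: fRhw_def)
next
  fix t a b v assume t: "t \<in> {1..T}" and a: "a \<in> Aset a1" and b: "b \<in> Bset b1" and v: "v \<in> Wset"
  have a1': "1 < a" using Aset_gt[OF a1 a] .
  have b0: "0 < b" using Bset_pos[OF b1 b] .
  have tT: "t \<le> T" using t by simp
  have v0: "0 < v" using v by (simp add: Wset_def)
  note KL = KL_pos[OF c0 cp a1', of T t]
  have zq: "b * zw p c T t a v / b = zw p c T t a v" using b0 by simp
  have zq0: "0 \<le> b * zw p c T t a v" using b0 by (simp add: zw_def zstar_nn)
  show "integrable (pred a b) (\<lambda>d. case Phi a b q' d of (x, y) \<Rightarrow> y * fRw p c T (Suc t) x / (x - 1))"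
    if "q' \<in> Qset" for q'
    using E_V(1)[OF a1' b0, of q' "fRw p c T (Suc t)"] that by (simp add: Qset_def)
  show "PiR p v q' a b + Epred a b (\<lambda>d. case Phi a b q' d of (x, y) \<Rightarrow> y * fRw p c T (Suc t) x / (x - 1))
      \<le> PiR p v (b * zw p c T t a v) a b + Epred a b (\<lambda>d. case Phi a b (b * zw p c T t a v) d of (x, y) \<Rightarrow> y * fRw p c T (Suc t) x / (x - 1))"
    if "q' \<in> Qset" for q'
  proof -
    have q0: "0 \<le> q'" using that by (simp add: Qset_def)
    have q0': "0 \<le> q' / b" using q0 b0 by simp
    have "JR a (Kf p c T t a) v (q' / b) \<le> JR a (Kf p c T t a) v (zstar a (Kf p c T t a) v)"
      using JR_opt[OF c0 a1' KL v0 q0'] by (cases "q' / b = zstar a (Kf p c T t a) v") (auto simp: less_imp_le)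
    then have "sPiR p v (q' / b) a + calE (fRw p c T (Suc t)) (q' / b) a
        \<le> sPiR p v (zw p c T t a v) a + calE (fRw p c T (Suc t)) (zw p c T t a v) a"
      unfolding objR[OF a1' q0'] objR[OF a1' zstar_nn] zw_def Kf_def by simp
    then show ?thesis
      unfolding mpe_objR[OF a1' b0 q0] mpe_objR[OF a1' b0 zq0] zq
      using a1' b0 by (intro mult_left_mono) auto
  qed
  show "b * fRhw p c T t a v / (a - 1) = PiR p v (b * zw p c T t a v) a b
      + Epred a b (\<lambda>d. case Phi a b (b * zw p c T t a v) d of (x, y) \<Rightarrow> y * fRw p c T (Suc t) x / (x - 1))"
    unfolding mpe_objR[OF a1' b0 zq0] zq using tT by (simp add: fRhw_def)
next
  fix t a b assume t: "t \<in> {1..T}" and a: "a \<in> Aset a1" and b: "b \<in> Bset b1"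
  have a1': "1 < a" using Aset_gt[OF a1 a] .
  have b0: "0 < b" using Bset_pos[OF b1 b] .
  have tT: "t \<le> T" using t by simp
  note KL = KL_pos[OF c0 cp a1', of T t]
  have zq: "b * zw p c T t a v / b = zw p c T t a v" for v using b0 by simp
  have zq0: "0 \<le> b * zw p c T t a v" for v using b0 by (simp add: zw_def zstar_nn)
  show "integrable (pred a b) (\<lambda>d. case Phi a b (b * zw p c T t a v) d of (x, y) \<Rightarrow> y * fMw p c T (Suc t) x / (x - 1))"
    if "v \<in> Wset" for v
    using E_V(1)[OF a1' b0 zq0, of "fMw p c T (Suc t)"] by simp
  have LK: "Lf p c T t a = Kf p c T t a + fMw p c T (Suc t) (a + 1) - fMw p c T (Suc t) a"
    by (simp add: Lf_def)
  have oM: "PiM c v (b * zw p c T t a v) + Epred a b (\<lambda>d. case Phi a b (b * zw p c T t a v) d of (x, y) \<Rightarrow> y * fMw p c T (Suc t) x / (x - 1))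
     = b / (a - 1) * (fMw p c T (Suc t) a + JM c a (Kf p c T t a) (Lf p c T t a) v)" if "0 < v" for v
    unfolding mpe_objM[OF a1' b0 zq0] zq unfolding zw_def objM[OF a1' that] LK ..
  have w0: "0 < ww p c T t a" unfolding ww_def by (rule wst_props(1)[OF c0 a1' KL])
  show "PiM c v (b * zw p c T t a v) + Epred a b (\<lambda>d. case Phi a b (b * zw p c T t a v) d of (x, y) \<Rightarrow> y * fMw p c T (Suc t) x / (x - 1))
     \<le> PiM c (ww p c T t a) (b * zw p c T t a (ww p c T t a)) + Epred a b (\<lambda>d. case Phi a b (b * zw p c T t a (ww p c T t a)) d of (x, y) \<Rightarrow> y * fMw p c T (Suc t) x / (x - 1))"
    if "v \<in> Wset" for v
  proof -
    have v0: "0 < v" using that by (simp add: Wset_def)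
    have "JM c a (Kf p c T t a) (Lf p c T t a) v \<le> JM c a (Kf p c T t a) (Lf p c T t a) (ww p c T t a)"
      using JM_opt[OF c0 a1' KL v0] by (cases "v = ww p c T t a") (auto simp: ww_def less_imp_le)
    then show ?thesis unfolding oM[OF v0] oM[OF w0] using a1' b0 by (intro mult_left_mono) auto
  qed
  show "b * fMw p c T t a / (a - 1) = PiM c (ww p c T t a) (b * zw p c T t a (ww p c T t a))
     + Epred a b (\<lambda>d. case Phi a b (b * zw p c T t a (ww p c T t a)) d of (x, y) \<Rightarrow> y * fMw p c T (Suc t) x / (x - 1))"
    unfolding oM[OF w0] W_stage(2)[OF c0 cp tT a1'] by simp
next
  fix t a b assume t: "t \<in> {1..T}" and a: "a \<in> Aset a1" and b: "b \<in> Bset b1"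
  have a1': "1 < a" using Aset_gt[OF a1 a] .
  have tT: "t \<le> T" using t by simp
  have "fRw p c T t a = fRhw p c T t a (ww p c T t a)"
    unfolding fRhw_def using tT objR[OF a1' zstar_nn] W_stage(1)[OF c0 cp tT a1']
    by (simp add: zw_def Kf_def)
  then show "b * fRw p c T t a / (a - 1) = b * fRhw p c T t a (ww p c T t a) / (a - 1)" by simp
qed

lemma E_transfer:
  assumes a1: "1 < a1" and b1: "0 < b1" and a: "a \<in> Aset a1" and b: "b \<in> Bset b1" and q: "0 \<le> q"
    and int: "integrable (pred a b) (\<lambda>d. case_prod V (Phi a b q d))"
    and eq: "\<forall>a'\<in>Aset a1. \<forall>b'\<in>Bset b1. V a' b' = b' * g a' / (a' - 1)"
  shows "Epred a b (\<lambda>d. case_prod V (Phi a b q d)) = Epred a b (\<lambda>d. case Phi a b q d of (a', b') \<Rightarrow> b' * g a' / (a' - 1))"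
proof -
  have a1': "1 < a" using Aset_gt[OF a1 a] .
  have b0: "0 < b" using Bset_pos[OF b1 b] .
  have AE: "AE d in pred a b. case_prod V (Phi a b q d) = (case Phi a b q d of (a', b') \<Rightarrow> b' * g a' / (a' - 1))"
  proof -
    have "AE d in pred a b. 0 \<le> d" using AE_pred_nonneg[of a b] a1' b0 by simp
    then show ?thesis
  proof (rule AE_mp, intro AE_I2 impI)
    fix d :: real assume d: "0 \<le> d"
    have A: "a + (if min d q < q then 1 else 0) \<in> Aset a1" using a Aset_suc[OF a] by auto
    have B: "b + min d q \<in> Bset b1" using b d q by (auto simp: Bset_def)
    show "case_prod V (Phi a b q d) = (case Phi a b q d of (a', b') \<Rightarrow> b' * g a' / (a' - 1))"
      using eq A B by (simp add: Phi_def)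
  qed
  qed
  show ?thesis unfolding Epred_def
    by (rule integral_cong_AE[OF borel_measurable_integrable[OF int]
          borel_measurable_integrable[OF E_V(1)[OF a1' b0 q]] AE])
qed

lemma scale_lt: "0 < (b::real) \<Longrightarrow> 1 < a \<Longrightarrow> X < Y \<Longrightarrow> b / (a - 1) * (F + X) < b / (a - 1) * (F + Y)"
  by (rule mult_strict_left_mono) auto

lemma mpe_stage_unique:
  assumes c0: "0 < c" and cp: "c < p" and a1: "1 < a1" and b1: "0 < b1"
    and BM: "borel_markov a1 b1 T w' q'"
    and MV: "mpe_values p c T a1 b1 w' q' VR VM VRh"
    and t: "t \<in> {1..T}"
    and IH: "\<forall>a\<in>Aset a1. \<forall>b\<in>Bset b1. VR (Suc t) a b = b * fRw p c T (Suc t) a / (a - 1)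
                 \<and> VM (Suc t) a b = b * fMw p c T (Suc t) a / (a - 1)"
    and a: "a \<in> Aset a1" and b: "b \<in> Bset b1"
  shows "(\<forall>v\<in>Wset. q' t a b v = b * zw p c T t a v) \<and> w' t a b = ww p c T t a
      \<and> VR t a b = b * fRw p c T t a / (a - 1) \<and> VM t a b = b * fMw p c T t a / (a - 1)"
proof -
  have a1': "1 < a" using Aset_gt[OF a1 a] .
  have b0: "0 < b" using Bset_pos[OF b1 b] .
  have tT: "t \<le> T" using t by simp
  note KL = KL_pos[OF c0 cp a1', of T t]
  have IHR: "\<forall>a'\<in>Aset a1. \<forall>b'\<in>Bset b1. VR (Suc t) a' b' = b' * fRw p c T (Suc t) a' / (a' - 1)"
    using IH by blast
  have IHM: "\<forall>a'\<in>Aset a1. \<forall>b'\<in>Bset b1. VM (Suc t) a' b' = b' * fMw p c T (Suc t) a' / (a' - 1)"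
    using IH by blast
  have BMt: "w' t a b \<in> Wset" "\<And>v. v \<in> Wset \<Longrightarrow> q' t a b v \<in> Qset"
    using BM t a b unfolding borel_markov_def by blast+
  have M2: "\<forall>v\<in>Wset.
        (\<forall>q''\<in>Qset. integrable (pred a b) (\<lambda>d. case_prod (VR (Suc t)) (Phi a b q'' d))) \<and>
        (\<forall>q''\<in>Qset. PiR p v q'' a b + Epred a b (\<lambda>d. case_prod (VR (Suc t)) (Phi a b q'' d))
            \<le> PiR p v (q' t a b v) a b
               + Epred a b (\<lambda>d. case_prod (VR (Suc t)) (Phi a b (q' t a b v) d))) \<and>
        VRh t a b v = PiR p v (q' t a b v) a b
               + Epred a b (\<lambda>d. case_prod (VR (Suc t)) (Phi a b (q' t a b v) d))"
    using MV t a b unfolding mpe_values_def by blast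
  have M3: "(\<forall>v\<in>Wset. integrable (pred a b) (\<lambda>d. case_prod (VM (Suc t)) (Phi a b (q' t a b v) d))) \<and>
        (\<forall>v\<in>Wset. PiM c v (q' t a b v)
                     + Epred a b (\<lambda>d. case_prod (VM (Suc t)) (Phi a b (q' t a b v) d))
            \<le> PiM c (w' t a b) (q' t a b (w' t a b))
               + Epred a b (\<lambda>d. case_prod (VM (Suc t)) (Phi a b (q' t a b (w' t a b)) d))) \<and>
        VM t a b = PiM c (w' t a b) (q' t a b (w' t a b))
               + Epred a b (\<lambda>d. case_prod (VM (Suc t)) (Phi a b (q' t a b (w' t a b)) d))"
    using MV t a b unfolding mpe_values_def by blast
  have M4: "VR t a b = VRh t a b (w' t a b)"
    using MV t a b unfolding mpe_values_def by blast
  have oR: "PiR p v q a b + Epred a b (\<lambda>d. case_prod (VR (Suc t)) (Phi a b q d))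
      = b / (a - 1) * (fRw p c T (Suc t) a + JR a (Kf p c T t a) v (q / b))"
    if v: "v \<in> Wset" and q: "q \<in> Qset" for v q
  proof -
    have q0: "0 \<le> q" using q by (simp add: Qset_def)
    have q0': "0 \<le> q / b" using q0 b0 by simp
    have int: "integrable (pred a b) (\<lambda>d. case_prod (VR (Suc t)) (Phi a b q d))" using M2 v q by blast
    show ?thesis
      unfolding E_transfer[OF a1 b1 a b q0 int IHR] mpe_objR[OF a1' b0 q0] objR[OF a1' q0'] Kf_def ..
  qed
  have zeq: "q' t a b v = b * zw p c T t a v" if v: "v \<in> Wset" for v
  proof (rule ccontr)
    assume ne: "q' t a b v \<noteq> b * zw p c T t a v"
    have v0: "0 < v" using v by (simp add: Wset_def)
    have qQ: "q' t a b v \<in> Qset" by (rule BMt(2)[OF v])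
    have bzQ: "b * zw p c T t a v \<in> Qset" using b0 by (simp add: Qset_def zw_def zstar_nn)
    have q0': "0 \<le> q' t a b v / b" using qQ b0 by (simp add: Qset_def)
    have ne': "q' t a b v / b \<noteq> zstar a (Kf p c T t a) v"
      using ne b0 by (auto simp: zw_def field_simps)
    have "JR a (Kf p c T t a) v (q' t a b v / b) < JR a (Kf p c T t a) v (zstar a (Kf p c T t a) v)"
      using JR_opt[OF c0 a1' KL v0 q0' ne'] .
    then have "b / (a - 1) * (fRw p c T (Suc t) a + JR a (Kf p c T t a) v (q' t a b v / b))
        < b / (a - 1) * (fRw p c T (Suc t) a + JR a (Kf p c T t a) v (b * zw p c T t a v / b))"
      using scale_lt[OF b0 a1'] b0 by (simp add: zw_def)
    moreover have "PiR p v (b * zw p c T t a v) a b + Epred a b (\<lambda>d. case_prod (VR (Suc t)) (Phi a b (b * zw p c T t a v) d))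
            \<le> PiR p v (q' t a b v) a b + Epred a b (\<lambda>d. case_prod (VR (Suc t)) (Phi a b (q' t a b v) d))"
      using M2 v bzQ by blast
    ultimately show False unfolding oR[OF v qQ] oR[OF v bzQ] by simp
  qed
  have LK: "Lf p c T t a = Kf p c T t a + fMw p c T (Suc t) (a + 1) - fMw p c T (Suc t) a"
    by (simp add: Lf_def)
  have oM: "PiM c v (q' t a b v) + Epred a b (\<lambda>d. case_prod (VM (Suc t)) (Phi a b (q' t a b v) d))
     = b / (a - 1) * (fMw p c T (Suc t) a + JM c a (Kf p c T t a) (Lf p c T t a) v)" if v: "v \<in> Wset" for v
  proof -
    have v0: "0 < v" using v by (simp add: Wset_def)
    have q0: "0 \<le> b * zw p c T t a v" using b0 by (simp add: zw_def zstar_nn)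
    have int: "integrable (pred a b) (\<lambda>d. case_prod (VM (Suc t)) (Phi a b (b * zw p c T t a v) d))"
    proof -
      have "integrable (pred a b) (\<lambda>d. case_prod (VM (Suc t)) (Phi a b (q' t a b v) d))" using M3 v by blast
      then show ?thesis unfolding zeq[OF v] .
    qed
    have zq: "b * zw p c T t a v / b = zw p c T t a v" using b0 by simp
    show ?thesis unfolding zeq[OF v] E_transfer[OF a1 b1 a b q0 int IHM] mpe_objM[OF a1' b0 q0] zq
      unfolding zw_def objM[OF a1' v0] LK ..
  qed
  have w0: "0 < ww p c T t a" unfolding ww_def by (rule wst_props(1)[OF c0 a1' KL])
  have wW: "ww p c T t a \<in> Wset" using w0 by (simp add: Wset_def)
  have weq: "w' t a b = ww p c T t a"
  proof (rule ccontr)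
    assume ne: "w' t a b \<noteq> ww p c T t a"
    have "JM c a (Kf p c T t a) (Lf p c T t a) (w' t a b) < JM c a (Kf p c T t a) (Lf p c T t a) (ww p c T t a)"
      using JM_opt[OF c0 a1' KL, of "w' t a b"] BMt(1) ne by (simp add: Wset_def ww_def)
    then have "b / (a - 1) * (fMw p c T (Suc t) a + JM c a (Kf p c T t a) (Lf p c T t a) (w' t a b))
        < b / (a - 1) * (fMw p c T (Suc t) a + JM c a (Kf p c T t a) (Lf p c T t a) (ww p c T t a))"
      using scale_lt[OF b0 a1'] by simp
    moreover have "PiM c (ww p c T t a) (q' t a b (ww p c T t a)) + Epred a b (\<lambda>d. case_prod (VM (Suc t)) (Phi a b (q' t a b (ww p c T t a)) d))
            \<le> PiM c (w' t a b) (q' t a b (w' t a b)) + Epred a b (\<lambda>d. case_prod (VM (Suc t)) (Phi a b (q' t a b (w' t a b)) d))"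
      using M3 wW by blast
    ultimately show False unfolding oM[OF BMt(1)] oM[OF wW] by simp
  qed
  have VMeq: "VM t a b = b * fMw p c T t a / (a - 1)"
  proof -
    have "VM t a b = b / (a - 1) * (fMw p c T (Suc t) a + JM c a (Kf p c T t a) (Lf p c T t a) (ww p c T t a))"
      using M3 oM[OF BMt(1)] weq by simp
    also have "\<dots> = b * fMw p c T t a / (a - 1)" using W_stage(2)[OF c0 cp tT a1'] by simp
    finally show ?thesis .
  qed
  have VReq: "VR t a b = b * fRw p c T t a / (a - 1)"
  proof -
    have qQ: "q' t a b (w' t a b) \<in> Qset" by (rule BMt(2)[OF BMt(1)])
    have "VR t a b = PiR p (w' t a b) (q' t a b (w' t a b)) a b
               + Epred a b (\<lambda>d. case_prod (VR (Suc t)) (Phi a b (q' t a b (w' t a b)) d))"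
      using M4 M2 BMt(1) by simp
    also have "\<dots> = b / (a - 1) * (fRw p c T (Suc t) a + JR a (Kf p c T t a) (ww p c T t a) (zw p c T t a (ww p c T t a)))"
      unfolding oR[OF BMt(1) qQ] unfolding weq zeq[OF wW] using b0 by simp
    also have "\<dots> = b * fRw p c T t a / (a - 1)" using W_stage(1)[OF c0 cp tT a1'] by simp
    finally show ?thesis .
  qed
  show ?thesis using zeq weq VMeq VReq by blast
qed

lemma mpe_unique:
  assumes c0: "0 < c" and cp: "c < p" and a1: "1 < a1" and b1: "0 < b1"
    and MPE: "is_mpe p c T a1 b1 w' q'"
  shows "\<forall>t\<in>{1..T}. \<forall>a\<in>Aset a1. \<forall>b\<in>Bset b1.
            w' t a b = ww p c T t a \<and> (\<forall>v\<in>Wset. q' t a b v = b * zw p c T t a v)"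
proof -
  have BM: "borel_markov a1 b1 T w' q'" using MPE by (simp add: is_mpe_def)
  obtain VR VM VRh where MV: "mpe_values p c T a1 b1 w' q' VR VM VRh"
    using MPE by (auto simp: is_mpe_def)
  have V: "k \<le> T \<Longrightarrow> \<forall>a\<in>Aset a1. \<forall>b\<in>Bset b1. VR (Suc T - k) a b = b * fRw p c T (Suc T - k) a / (a - 1)
                 \<and> VM (Suc T - k) a b = b * fMw p c T (Suc T - k) a / (a - 1)" for k
  proof (induction k)
    case 0
    then show ?case using MV unfolding mpe_values_def by (simp add: fRw_end fMw_end)
  next
    case (Suc k)
    have t: "Suc T - Suc k \<in> {1..T}" using Suc.prems by auto
    have st: "Suc (Suc T - Suc k) = Suc T - k" using Suc.prems by simp
    have IH: "\<forall>a\<in>Aset a1. \<forall>b\<in>Bset b1. VR (Suc (Suc T - Suc k)) a b = b * fRw p c T (Suc (Suc T - Suc k)) a / (a - 1)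
                 \<and> VM (Suc (Suc T - Suc k)) a b = b * fMw p c T (Suc (Suc T - Suc k)) a / (a - 1)"
      unfolding st using Suc.IH Suc.prems by simp
    show ?case using mpe_stage_unique[OF c0 cp a1 b1 BM MV t IH] by blast
  qed
  show ?thesis
  proof (intro ballI)
    fix t a b assume t: "t \<in> {1..T}" and a: "a \<in> Aset a1" and b: "b \<in> Bset b1"
    have k: "T - t \<le> T" by simp
    have st: "Suc T - (T - t) = Suc t" using t by auto
    have IH: "\<forall>a\<in>Aset a1. \<forall>b\<in>Bset b1. VR (Suc t) a b = b * fRw p c T (Suc t) a / (a - 1)
                 \<and> VM (Suc t) a b = b * fMw p c T (Suc t) a / (a - 1)"
      using V[OF k] unfolding st .
    show "w' t a b = ww p c T t a \<and> (\<forall>v\<in>Wset. q' t a b v = b * zw p c T t a v)"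
      using mpe_stage_unique[OF c0 cp a1 b1 BM MV t IH a b] by blast
  qed
qed

lemma meas_piece:
  fixes f :: "real \<times> 'b::second_countable_topology \<Rightarrow> real"
  assumes "\<And>n. \<exists>h\<in>borel_measurable (restrict_space borel (Aset a1 \<times> S)).
              \<forall>x\<in>{x\<in>Aset a1 \<times> S. fst x = a1 + real n}. f x = h x"
  shows "f \<in> borel_measurable (restrict_space borel (Aset a1 \<times> S))"
  apply (rule measurable_piecewise_restrict2[where A="\<lambda>n. {x\<in>Aset a1 \<times> S. fst x = a1 + real n}"])
  subgoal for n
  proof -
    have e: "{x\<in>Aset a1 \<times> S. fst x = a1 + real n} = (Aset a1 \<times> S) \<inter> {x. fst x = a1 + real n}" by auto
    have "closed {x::real \<times> 'b. fst x = a1 + real n}"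
      by (intro closed_Collect_eq continuous_intros)
    then have "{x::real \<times> 'b. fst x = a1 + real n} \<in> sets borel" by (rule borel_closed)
    then show ?thesis unfolding e by (auto simp: sets_restrict_space)
  qed
  subgoal by (auto simp: space_restrict_space Aset_def)
  subgoal using assms by blast
  done

lemma borel_markov_cand:
  assumes c0: "0 < c" and cp: "c < p" and a1: "1 < a1" and b1: "0 < b1"
  shows "borel_markov a1 b1 T (\<lambda>t a b. ww p c T t a) (\<lambda>t a b v. b * zw p c T t a v)"
  unfolding borel_markov_def
proof (intro ballI conjI)
  fix t a b assume t: "t \<in> {1..T}" and a: "a \<in> Aset a1" and b: "b \<in> Bset b1"
  have a1': "1 < a" using Aset_gt[OF a1 a] .
  note KL = KL_pos[OF c0 cp a1', of T t]
  show "ww p c T t a \<in> Wset" unfolding ww_def Wset_def using wst_props(1)[OF c0 a1' KL] by simp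
  fix v assume "v \<in> Wset"
  show "b * zw p c T t a v \<in> Qset" using Bset_pos[OF b1 b] by (simp add: Qset_def zw_def zstar_nn)
next
  fix t
  show "(\<lambda>x. ww p c T t (fst x)) \<in> borel_measurable (restrict_space borel (Aset a1 \<times> Bset b1))"
  proof (rule meas_piece)
    fix n
    show "\<exists>h\<in>borel_measurable (restrict_space borel (Aset a1 \<times> Bset b1)).
              \<forall>x\<in>{x\<in>Aset a1 \<times> Bset b1. fst x = a1 + real n}. ww p c T t (fst x) = h x"
      by (rule bexI[of _ "\<lambda>x. ww p c T t (a1 + real n)"]) auto
  qed
  show "(\<lambda>x. fst (snd x) * zw p c T t (fst x) (snd (snd x))) \<in> borel_measurable (restrict_space borel (Aset a1 \<times> Bset b1 \<times> Wset))"
  proof (rule meas_piece)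
    fix n
    let ?h = "\<lambda>x::real \<times> real \<times> real. fst (snd x) * max ((Kf p c T t (a1 + real n) / snd (snd x)) powr (1 / (a1 + real n)) - 1) 0"
    have [measurable]: "(\<lambda>x::real \<times> real \<times> real. fst (snd x)) \<in> borel_measurable borel"
      by (intro borel_measurable_continuous_onI continuous_intros)
    have [measurable]: "(\<lambda>x::real \<times> real \<times> real. snd (snd x)) \<in> borel_measurable borel"
      by (intro borel_measurable_continuous_onI continuous_intros)
    have "?h \<in> borel_measurable borel" by measurable
    then have "?h \<in> borel_measurable (restrict_space borel (Aset a1 \<times> Bset b1 \<times> Wset))"
      by (rule measurable_restrict_space1)
    then show "\<exists>h\<in>borel_measurable (restrict_space borel (Aset a1 \<times> Bset b1 \<times> Wset)).
              \<forall>x\<in>{x\<in>Aset a1 \<times> Bset b1 \<times> Wset. fst x = a1 + real n}. fst (snd x) * zw p c T t (fst x) (snd (snd x)) = h x"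
      by (rule bexI[rotated]) (auto simp: zw_def zstar_def)
  qed
qed

theorem theorem2:
  fixes p c a1 b1 :: real and T :: nat
  assumes "0 < c" and "c < p" and "1 \<le> T" and "0 < b1" and "1 < a1"
  shows "\<exists>w z fR fM fRh.
    \<comment> \<open>(a) existence of an SMPS with value functions fR fM fRh\<close>
    smps_values p c T a1 w z fR fM fRh \<and>
    \<comment> \<open>(a) uniqueness of the SMPS\<close>
    (\<forall>w' z'. is_smps p c T a1 w' z' \<longrightarrow>
        (\<forall>t\<in>{1..T}. \<forall>a\<in>Aset a1. w' t a = w t a \<and> (\<forall>v\<in>Wset. z' t a v = z t a v))) \<and>
    \<comment> \<open>(a) closed-form characterization\<close>
    (\<forall>t\<in>{1..T}. \<forall>a\<in>Aset a1.
        w t a = (p + fR (Suc t) (a + 1) - fR (Suc t) a)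
                * (1 - 1 / a + c / (a * w t a)
                   - (fM (Suc t) (a + 1) - fM (Suc t) a)
                     / (a * (p + fR (Suc t) (a + 1) - fR (Suc t) a))) powr a \<and>
        (\<forall>v\<in>Wset. z t a v = max (((p + fR (Suc t) (a + 1) - fR (Suc t) a) / v) powr (1 / a) - 1) 0) \<and>
        z t a (w t a) = ((p + fR (Suc t) (a + 1) - fR (Suc t) a) / w t a) powr (1 / a) - 1 \<and>
        fR t a = (\<Sum>i=0..T-t. p - w (t+i) (a + real i)
                     * (1 + (a + real i) * z (t+i) (a + real i) (w (t+i) (a + real i)))) \<and>
        fM t a = (\<Sum>i=0..T-t. w (t+i) (a + real i)
                     - c * (1 + (a + real i) * z (t+i) (a + real i) (w (t+i) (a + real i))))) \<and>
    (\<forall>a\<in>Aset a1. fR (Suc T) a = 0 \<and> fM (Suc T) a = 0) \<and>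
    \<comment> \<open>(b) the MPE, and its uniqueness\<close>
    is_mpe p c T a1 b1 (\<lambda>t a b. w t a) (\<lambda>t a b v. b * z t a v) \<and>
    (\<forall>w' q'. is_mpe p c T a1 b1 w' q' \<longrightarrow>
        (\<forall>t\<in>{1..T}. \<forall>a\<in>Aset a1. \<forall>b\<in>Bset b1.
            w' t a b = w t a \<and> (\<forall>v\<in>Wset. q' t a b v = b * z t a v)))"
proof -
  have c0: "0 < c" and cp: "c < p" and a1: "1 < a1" and b1: "0 < b1" using assms by auto
  show ?thesis
  proof (intro exI conjI)
    show "smps_values p c T a1 (ww p c T) (zw p c T) (fRw p c T) (fMw p c T) (fRhw p c T)"
      by (rule smps_exists[OF c0 cp a1])
    show "\<forall>w' z'. is_smps p c T a1 w' z' \<longrightarrow>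
        (\<forall>t\<in>{1..T}. \<forall>a\<in>Aset a1. w' t a = ww p c T t a \<and> (\<forall>v\<in>Wset. z' t a v = zw p c T t a v))"
    proof (intro allI impI)
      fix w' z' assume "is_smps p c T a1 w' z'"
      then obtain fR' fM' fRh' where "smps_values p c T a1 w' z' fR' fM' fRh'" by (auto simp: is_smps_def)
      then show "\<forall>t\<in>{1..T}. \<forall>a\<in>Aset a1. w' t a = ww p c T t a \<and> (\<forall>v\<in>Wset. z' t a v = zw p c T t a v)"
        by (rule smps_unique[OF c0 cp a1])
    qed
    show "\<forall>t\<in>{1..T}. \<forall>a\<in>Aset a1.
        ww p c T t a = (p + fRw p c T (Suc t) (a + 1) - fRw p c T (Suc t) a)
                * (1 - 1 / a + c / (a * ww p c T t a)
                   - (fMw p c T (Suc t) (a + 1) - fMw p c T (Suc t) a)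
                     / (a * (p + fRw p c T (Suc t) (a + 1) - fRw p c T (Suc t) a))) powr a \<and>
        (\<forall>v\<in>Wset. zw p c T t a v = max (((p + fRw p c T (Suc t) (a + 1) - fRw p c T (Suc t) a) / v) powr (1 / a) - 1) 0) \<and>
        zw p c T t a (ww p c T t a) = ((p + fRw p c T (Suc t) (a + 1) - fRw p c T (Suc t) a) / ww p c T t a) powr (1 / a) - 1 \<and>
        fRw p c T t a = (\<Sum>i=0..T-t. p - ww p c T (t+i) (a + real i)
                     * (1 + (a + real i) * zw p c T (t+i) (a + real i) (ww p c T (t+i) (a + real i)))) \<and>
        fMw p c T t a = (\<Sum>i=0..T-t. ww p c T (t+i) (a + real i)
                     - c * (1 + (a + real i) * zw p c T (t+i) (a + real i) (ww p c T (t+i) (a + real i))))"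
    proof (intro ballI conjI)
      fix t a assume t: "t \<in> {1..T}" and a: "a \<in> Aset a1"
      have a1': "1 < a" using Aset_gt[OF a1 a] .
      have tT: "t \<le> T" using t by simp
      show "ww p c T t a = (p + fRw p c T (Suc t) (a + 1) - fRw p c T (Suc t) a)
                * (1 - 1 / a + c / (a * ww p c T t a)
                   - (fMw p c T (Suc t) (a + 1) - fMw p c T (Suc t) a)
                     / (a * (p + fRw p c T (Suc t) (a + 1) - fRw p c T (Suc t) a))) powr a"
        by (rule closed_w[OF c0 cp a1'])
      show "zw p c T t a v = max (((p + fRw p c T (Suc t) (a + 1) - fRw p c T (Suc t) a) / v) powr (1 / a) - 1) 0" for v
        by (simp add: zw_def zstar_def Kf_def)
      show "zw p c T t a (ww p c T t a) = ((p + fRw p c T (Suc t) (a + 1) - fRw p c T (Suc t) a) / ww p c T t a) powr (1 / a) - 1"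
        by (rule closed_zw[OF c0 cp a1'])
      show "fRw p c T t a = (\<Sum>i=0..T-t. p - ww p c T (t+i) (a + real i)
                     * (1 + (a + real i) * zw p c T (t+i) (a + real i) (ww p c T (t+i) (a + real i))))"
        by (rule fR_sum[OF c0 cp tT a1'])
      show "fMw p c T t a = (\<Sum>i=0..T-t. ww p c T (t+i) (a + real i)
                     - c * (1 + (a + real i) * zw p c T (t+i) (a + real i) (ww p c T (t+i) (a + real i))))"
        by (rule fM_sum[OF c0 cp tT a1'])
    qed
    show "\<forall>a\<in>Aset a1. fRw p c T (Suc T) a = 0 \<and> fMw p c T (Suc T) a = 0"
      by (simp add: fRw_end fMw_end)
    show "is_mpe p c T a1 b1 (\<lambda>t a b. ww p c T t a) (\<lambda>t a b v. b * zw p c T t a v)"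
      unfolding is_mpe_def using borel_markov_cand[OF c0 cp a1 b1] mpe_exists[OF c0 cp a1 b1] by blast
    show "\<forall>w' q'. is_mpe p c T a1 b1 w' q' \<longrightarrow>
        (\<forall>t\<in>{1..T}. \<forall>a\<in>Aset a1. \<forall>b\<in>Bset b1.
            w' t a b = ww p c T t a \<and> (\<forall>v\<in>Wset. q' t a b v = b * zw p c T t a v))"
      using mpe_unique[OF c0 cp a1 b1] by blast
  qed
qed

end
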